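(* Let $(A,B,C)$ be a good cut-partition of an \{ISK4,wheel\}-free trigraph $G$, and for each $X\in\{A,B\}$ let $G_X$ be the $X$-block of $G$ with respect to $(A,B,C)$. Then $G_A$ and $G_B$ are \{ISK4,wheel\}-free.
   Context: A trigraph $G$ consists of a finite vertex set $V(G)$ and an adjacency function $\theta_G:\binom{V(G)}{2}\to\{-1,0,1\}$; for distinct $u,v$ write $uv$ for $\{u,v\}$. The pair $uv$ is strongly adjacent if $\theta_G(uv)=1$, semi-adjacent if $\theta_G(uv)=0$, strongly anti-adjacent if $\theta_G(uv)=-1$; $u,v$ are adjacent if $\theta_G(uv)\ge 0$ and anti-adjacent if $\theta_G(uv)\le 0$. For $X\subseteq V(G)$, $G[X]$ is the trigraph on $X$ with the restricted adjacency function, and $G\setminus X=G[V(G)\setminus X]$. A realization of $G$ is a graph on $V(G)$ obtained by turning each semi-adjacent pair into either an edge or a non-edge (strongly adjacent pairs are edges, strongly anti-adjacent pairs non-edges); the full realization turns all semi-adjacent pairs into edges. A stable set is a set of pairwise anti-adjacent vertices; a strong clique is a set of pairwise strongly adjacent vertices. $G$ is connected if its full realization is connected. A narrow path in $G$ between $a$ and $b$ is an induced subtrigraph whose full realization is a path with endpoints $a$ and $b$. An ISK4 is a graph isomorphic to a subdivision of $K_4$. A wheel is a graph consisting of a chordless cycle of length at least four together with a vertex having at least three neighbors on the cycle. A trigraph is \{ISK4,wheel\}-free if none of its realizations has an induced subgraph that is an ISK4 or a wheel. A cut-partition of $G$ is a partition $(A,B,C)$ of $V(G)$ with $A,B$ non-empty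 ($C$ possibly empty) such that every vertex of $A$ is strongly anti-adjacent to every vertex of $B$. A clique-cutset is a (possibly empty) strong clique $C$ with $G\setminus C$ disconnected; a stable 2-cutset is a stable set $C$ of size two with $G\setminus C$ disconnected. A good cut-partition is a cut-partition $(A,B,C)$ such that either $C$ is a clique-cutset with $|C|\le 3$ (type clique), or $C$ is a stable 2-cutset and each of $G[A\cup C]$ and $G[B\cup C]$ contains a narrow path between the two vertices of $C$ (type stable). For $X\in\{A,B\}$, the $X$-block of $G$ with respect to a good cut-partition $(A,B,C)$ is $G[X\cup C]$ if the type is clique, and is the trigraph obtained from $G[X\cup C]$ by making the two vertices of $C$ semi-adjacent if the type is stable. *)

theory Defs
  imports Main
begin

definition trigraph :: "'a set \<Rightarrow> ('a \<Rightarrow> 'a \<Rightarrow> int) \<Rightarrow> bool" where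
  "trigraph V th \<equiv> finite V \<and>
     (\<forall>u\<in>V. \<forall>v\<in>V. u \<noteq> v \<longrightarrow> th u v = th v u \<and> th u v \<in> {-1, 0, 1})"

definition realization :: "'a set \<Rightarrow> ('a \<Rightarrow> 'a \<Rightarrow> int) \<Rightarrow> ('a \<Rightarrow> 'a \<Rightarrow> bool) \<Rightarrow> bool" where
  "realization V th E \<equiv>
     (\<forall>u v. E u v \<longrightarrow> u \<in> V \<and> v \<in> V \<and> u \<noteq> v \<and> E v u) \<and>
     (\<forall>u\<in>V. \<forall>v\<in>V. u \<noteq> v \<longrightarrow> (th u v = 1 \<longrightarrow> E u v) \<and> (th u v = -1 \<longrightarrow> \<not> E u v))"

definition full_adj :: "'a set \<Rightarrow> ('a \<Rightarrow> 'a \<Rightarrow> int) \<Rightarrow> 'a \<Rightarrow> 'a \<Rightarrow> bool" where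
  "full_adj V th u v \<equiv> u \<in> V \<and> v \<in> V \<and> u \<noteq> v \<and> th u v \<ge> 0"

definition graph_connected :: "'a set \<Rightarrow> ('a \<Rightarrow> 'a \<Rightarrow> bool) \<Rightarrow> bool" where
  "graph_connected V E \<equiv> V \<noteq> {} \<and>
     (\<forall>u\<in>V. \<forall>v\<in>V. (\<lambda>x y. x \<in> V \<and> y \<in> V \<and> E x y)\<^sup>*\<^sup>* u v)"

definition tconnected :: "'a set \<Rightarrow> ('a \<Rightarrow> 'a \<Rightarrow> int) \<Rightarrow> bool" where
  "tconnected V th \<equiv> graph_connected V (full_adj V th)"

definition strong_clique :: "'a set \<Rightarrow> ('a \<Rightarrow> 'a \<Rightarrow> int) \<Rightarrow> 'a set \<Rightarrow> bool" where
  "strong_clique V th K \<equiv> K \<subseteq> V \<and> (\<forall>u\<in>K. \<forall>v\<in>K. u \<noteq> v \<longrightarrow> th u v = 1)"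

definition stable_set :: "'a set \<Rightarrow> ('a \<Rightarrow> 'a \<Rightarrow> int) \<Rightarrow> 'a set \<Rightarrow> bool" where
  "stable_set V th S \<equiv> S \<subseteq> V \<and> (\<forall>u\<in>S. \<forall>v\<in>S. u \<noteq> v \<longrightarrow> th u v \<le> 0)"

definition cut_partition ::
  "'a set \<Rightarrow> ('a \<Rightarrow> 'a \<Rightarrow> int) \<Rightarrow> 'a set \<Rightarrow> 'a set \<Rightarrow> 'a set \<Rightarrow> bool" where
  "cut_partition V th A B C \<equiv> A \<union> B \<union> C = V \<and> A \<inter> B = {} \<and> A \<inter> C = {} \<and> B \<inter> C = {} \<and>
     A \<noteq> {} \<and> B \<noteq> {} \<and> (\<forall>a\<in>A. \<forall>b\<in>B. th a b = -1)"

definition clique_cutset :: "'a set \<Rightarrow> ('a \<Rightarrow> 'a \<Rightarrow> int) \<Rightarrow> 'a set \<Rightarrow> bool" where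
  "clique_cutset V th C \<equiv> strong_clique V th C \<and> \<not> tconnected (V - C) th"

definition stable_2cutset :: "'a set \<Rightarrow> ('a \<Rightarrow> 'a \<Rightarrow> int) \<Rightarrow> 'a set \<Rightarrow> bool" where
  "stable_2cutset V th C \<equiv> stable_set V th C \<and> card C = 2 \<and> \<not> tconnected (V - C) th"

definition consec :: "'a list \<Rightarrow> 'a \<Rightarrow> 'a \<Rightarrow> bool" where
  "consec p u v \<equiv> \<exists>i. Suc i < length p \<and>
     ((p ! i = u \<and> p ! Suc i = v) \<or> (p ! i = v \<and> p ! Suc i = u))"

(* induced subtrigraph of (V,th) whose full realization is a path with ends a and b *)
definition narrow_path :: "'a set \<Rightarrow> ('a \<Rightarrow> 'a \<Rightarrow> int) \<Rightarrow> 'a \<Rightarrow> 'a \<Rightarrow> bool" where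
  "narrow_path V th a b \<equiv> \<exists>p. p \<noteq> [] \<and> distinct p \<and> hd p = a \<and> last p = b \<and> set p \<subseteq> V \<and>
     (\<forall>u\<in>set p. \<forall>v\<in>set p. u \<noteq> v \<longrightarrow> (th u v \<ge> 0 \<longleftrightarrow> consec p u v))"

definition good_cut_partition ::
  "'a set \<Rightarrow> ('a \<Rightarrow> 'a \<Rightarrow> int) \<Rightarrow> 'a set \<Rightarrow> 'a set \<Rightarrow> 'a set \<Rightarrow> bool" where
  "good_cut_partition V th A B C \<equiv> cut_partition V th A B C \<and>
     ((clique_cutset V th C \<and> card C \<le> 3) \<or>
      (stable_2cutset V th C \<and>
        (\<exists>a b. a \<noteq> b \<and> C = {a, b} \<and> narrow_path (A \<union> C) th a b \<and> narrow_path (B \<union> C) th a b)))"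

(* Adjacency function of a block: for type stable (C a stable pair) the two vertices
   of C become semi-adjacent; for type clique it is unchanged. The X-block has
   vertex set X \<union> C. *)
definition block_theta :: "('a \<Rightarrow> 'a \<Rightarrow> int) \<Rightarrow> 'a set \<Rightarrow> 'a \<Rightarrow> 'a \<Rightarrow> int" where
  "block_theta th C \<equiv>
     (if \<exists>a b. a \<noteq> b \<and> C = {a, b} \<and> th a b \<le> 0
      then (\<lambda>u v. if u \<noteq> v \<and> {u, v} = C then 0 else th u v) else th)"

definition consec_cyc :: "'a list \<Rightarrow> 'a \<Rightarrow> 'a \<Rightarrow> bool" where
  "consec_cyc cs u v \<equiv> \<exists>i < length cs. {cs ! i, cs ! ((i + 1) mod length cs)} = {u, v}"

definition hole :: "('a \<Rightarrow> 'a \<Rightarrow> bool) \<Rightarrow> 'a set \<Rightarrow> bool" where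
  "hole E H \<equiv> \<exists>cs. distinct cs \<and> length cs \<ge> 4 \<and> set cs = H \<and>
     (\<forall>u\<in>H. \<forall>v\<in>H. u \<noteq> v \<longrightarrow> (E u v \<longleftrightarrow> consec_cyc cs u v))"

definition wheel_in :: "('a \<Rightarrow> 'a \<Rightarrow> bool) \<Rightarrow> 'a set \<Rightarrow> bool" where
  "wheel_in E X \<equiv> \<exists>H c. X = insert c H \<and> c \<notin> H \<and> hole E H \<and> card {v \<in> H. E c v} \<ge> 3"

(* the subgraph of E induced on X is (isomorphic to) a subdivision of K4:
   branch vertices b 0..b 3, and for i<j<4 a path p i j from b i to b j,
   paths internally disjoint, and the edges are exactly the path edges *)
definition isk4_in :: "('a \<Rightarrow> 'a \<Rightarrow> bool) \<Rightarrow> 'a set \<Rightarrow> bool" where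
  "isk4_in E X \<equiv> \<exists>(b :: nat \<Rightarrow> 'a) (p :: nat \<Rightarrow> nat \<Rightarrow> 'a list).
     inj_on b {..<4} \<and>
     (\<forall>i j. i < j \<and> j < 4 \<longrightarrow>
        distinct (p i j) \<and> length (p i j) \<ge> 2 \<and> hd (p i j) = b i \<and> last (p i j) = b j \<and>
        set (butlast (tl (p i j))) \<inter> b ` {..<4} = {}) \<and>
     (\<forall>i j k l. i < j \<and> j < 4 \<and> k < l \<and> l < 4 \<and> (i, j) \<noteq> (k, l) \<longrightarrow>
        set (p i j) \<inter> set (p k l) \<subseteq> b ` {..<4}) \<and>
     X = (\<Union>i<4. \<Union>j\<in>{i<..<4}. set (p i j)) \<and>
     (\<forall>u\<in>X. \<forall>v\<in>X. u \<noteq> v \<longrightarrow>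
        (E u v \<longleftrightarrow> (\<exists>i j. i < j \<and> j < 4 \<and> consec (p i j) u v)))"

definition isk4_wheel_free :: "'a set \<Rightarrow> ('a \<Rightarrow> 'a \<Rightarrow> int) \<Rightarrow> bool" where
  "isk4_wheel_free V th \<equiv> \<forall>E. realization V th E \<longrightarrow>
     \<not> (\<exists>X \<subseteq> V. isk4_in E X \<or> wheel_in E X)"

end

theory Submission
  imports Defs
begin

lemma consec_sym: "consec p u v = consec p v u"
  unfolding consec_def by blast

lemma consec_in: "consec p u v \<Longrightarrow> u \<in> set p \<and> v \<in> set p"
  unfolding consec_def by (auto intro: nth_mem)

lemma consec_Nil[simp]: "\<not> consec [] u v"
  unfolding consec_def by auto

lemma consec_Cons: "consec (x # xs) u v \<longleftrightarrow> (xs \<noteq> [] \<and> {u,v} = {x, hd xs}) \<or> consec xs u v"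
proof
  assume "consec (x # xs) u v"
  then obtain i where i: "Suc i < length (x#xs)"
    "((x#xs) ! i = u \<and> (x#xs) ! Suc i = v) \<or> ((x#xs) ! i = v \<and> (x#xs) ! Suc i = u)"
    unfolding consec_def by blast
  show "(xs \<noteq> [] \<and> {u,v} = {x, hd xs}) \<or> consec xs u v"
  proof (cases i)
    case 0
    then show ?thesis using i by (cases xs) auto
  next
    case (Suc j)
    then show ?thesis using i unfolding consec_def by auto
  qed
next
  assume "(xs \<noteq> [] \<and> {u,v} = {x, hd xs}) \<or> consec xs u v"
  then show "consec (x # xs) u v"
  proof
    assume h: "xs \<noteq> [] \<and> {u,v} = {x, hd xs}"
    then have "Suc 0 < length (x#xs)" "(x#xs)!0 = x" "(x#xs)! Suc 0 = hd xs"
      by (cases xs; auto)+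
    then show ?thesis using h unfolding consec_def by (metis doubleton_eq_iff)
  next
    assume "consec xs u v"
    then obtain i where "Suc i < length xs"
      "(xs ! i = u \<and> xs ! Suc i = v) \<or> (xs ! i = v \<and> xs ! Suc i = u)"
      unfolding consec_def by blast
    then show ?thesis unfolding consec_def
      by (intro exI[of _ "Suc i"]) auto
  qed
qed

lemma consec_single[simp]: "\<not> consec [x] u v"
  by (simp add: consec_Cons)

lemma consec_append: "consec (xs @ ys) u v \<longleftrightarrow>
   consec xs u v \<or> consec ys u v \<or> (xs \<noteq> [] \<and> ys \<noteq> [] \<and> {u,v} = {last xs, hd ys})"
proof (induction xs)
  case Nil
  then show ?case by simp
next
  case (Cons x xs)
  show ?case
  proof (cases "xs = []")
    case True
    then show ?thesis by (simp add: consec_Cons) blast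
  next
    case False
    then show ?thesis by (simp add: consec_Cons Cons.IH)
  qed
qed

lemma consec_rev[simp]: "consec (rev xs) u v = consec xs u v"
proof (induction xs)
  case Nil
  then show ?case by simp
next
  case (Cons x xs)
  have "consec (rev (x # xs)) u v = (consec (rev xs) u v \<or> (xs \<noteq> [] \<and> {u,v} = {last (rev xs), x}))"
    by (simp add: consec_append)
  also have "\<dots> = (consec xs u v \<or> (xs \<noteq> [] \<and> {u,v} = {x, hd xs}))"
    using Cons.IH by (simp add: last_rev insert_commute)
  also have "\<dots> = consec (x # xs) u v" by (simp add: consec_Cons) blast
  finally show ?case .
qed

lemma consec_distinct_same: "distinct p \<Longrightarrow> \<not> consec p u u"
  unfolding consec_def by (auto simp: nth_eq_iff_index_eq)

lemma consec_cyc_alt: "xs \<noteq> [] \<Longrightarrow> consec_cyc xs u v \<longleftrightarrow> consec xs u v \<or> {u,v} = {last xs, hd xs}"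
proof -
  assume ne: "xs \<noteq> []"
  let ?n = "length xs"
  have last: "last xs = xs ! (?n - 1)" using ne by (simp add: last_conv_nth)
  have hd: "hd xs = xs ! 0" using ne by (simp add: hd_conv_nth)
  show ?thesis
  proof
    assume "consec_cyc xs u v"
    then obtain i where i: "i < ?n" "{xs ! i, xs ! ((i + 1) mod ?n)} = {u, v}"
      unfolding consec_cyc_def by blast
    show "consec xs u v \<or> {u,v} = {last xs, hd xs}"
    proof (cases "Suc i < ?n")
      case True
      then have "(i+1) mod ?n = Suc i" by simp
      then show ?thesis using i True unfolding consec_def by (auto simp: doubleton_eq_iff)
    next
      case False
      then have "i = ?n - 1" using i by auto
      moreover have "(i+1) mod ?n = 0" using ne \<open>i = ?n - 1\<close> by simp
      ultimately have "{xs ! (?n - 1), xs ! 0} = {u,v}" using i(2) by simp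
      then have "{u,v} = {last xs, hd xs}" by (simp add: last hd)
      then show ?thesis by blast
    qed
  next
    assume "consec xs u v \<or> {u,v} = {last xs, hd xs}"
    then show "consec_cyc xs u v"
    proof
      assume "consec xs u v"
      then obtain i where i: "Suc i < ?n"
        "(xs ! i = u \<and> xs ! Suc i = v) \<or> (xs ! i = v \<and> xs ! Suc i = u)"
        unfolding consec_def by blast
      then have "(i+1) mod ?n = Suc i" by simp
      then show ?thesis unfolding consec_cyc_def using i
        by (intro exI[of _ i]) auto
    next
      assume h: "{u,v} = {last xs, hd xs}"
      have "?n - 1 < ?n" "((?n - 1) + 1) mod ?n = 0" using ne by auto
      then show ?thesis unfolding consec_cyc_def using h last hd
        by (intro exI[of _ "?n - 1"]) auto
    qed
  qed
qed

lemma consec_cyc_swap: "xs \<noteq> [] \<Longrightarrow> ys \<noteq> [] \<Longrightarrow> consec_cyc (xs @ ys) u v = consec_cyc (ys @ xs) u v"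
proof -
  assume a: "xs \<noteq> []" "ys \<noteq> []"
  have e1: "consec_cyc (xs @ ys) u v = (consec xs u v \<or> consec ys u v \<or> {u,v} = {last xs, hd ys} \<or> {u,v} = {last ys, hd xs})"
    using a by (simp add: consec_cyc_alt consec_append)
  have e2: "consec_cyc (ys @ xs) u v = (consec ys u v \<or> consec xs u v \<or> {u,v} = {last ys, hd xs} \<or> {u,v} = {last xs, hd ys})"
    using a by (simp add: consec_cyc_alt consec_append)
  show ?thesis unfolding e1 e2 by (simp only: disj_ac)
qed

lemma consec_cyc_swap': "consec_cyc (xs @ ys) u v = consec_cyc (ys @ xs) u v"
  by (cases "xs = []"; cases "ys = []") (simp_all add: consec_cyc_swap)

lemma inner_set: "distinct l \<Longrightarrow> length l \<ge> 2 \<Longrightarrow> set (butlast (tl l)) = set l - {hd l, last l}"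
proof -
  assume d: "distinct l" and len: "length l \<ge> 2"
  obtain x l' where l0: "l = x # l'" using len by (cases l) auto
  have ne: "l' \<noteq> []" using l0 len by auto
  define m where "m = butlast l'"
  have l': "l' = m @ [last l']" using ne unfolding m_def by simp
  have l: "l = x # m @ [last l']" using l0 l' by simp
  have d2: "distinct (x # m @ [last l'])" using d l by simp
  have "set m = set (x # m @ [last l']) - {hd (x # m @ [last l']), last (x # m @ [last l'])}" using d2 by auto
  then have "set m = set l - {hd l, last l}" using l by simp
  then show ?thesis using l0 unfolding m_def by simp
qed

lemma splice_core:
  assumes dL: "distinct (L1 @ a # b # L2)" and dP: "distinct P" and ne: "P \<noteq> []"
    and h: "hd P = a" and l: "last P = b"
    and int: "set P \<inter> set (L1 @ a # b # L2) = {a,b}" and nab: "\<not> consec P a b"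
  shows "distinct (L1 @ P @ L2) \<and> hd (L1 @ P @ L2) = hd (L1 @ a # b # L2)
     \<and> last (L1 @ P @ L2) = last (L1 @ a # b # L2)
     \<and> set (L1 @ P @ L2) = set (L1 @ a # b # L2) \<union> set P
     \<and> length (L1 @ P @ L2) \<ge> length (L1 @ a # b # L2)
     \<and> (\<forall>u v. consec (L1 @ P @ L2) u v \<longleftrightarrow> (consec (L1 @ a # b # L2) u v \<and> {u,v} \<noteq> {a,b}) \<or> consec P u v)"
proof -
  have ab: "a \<noteq> b" using dL by simp
  have aP: "a \<in> set P" "b \<in> set P" using h l ne by auto
  have lenP: "length P \<ge> 2"
  proof (rule ccontr)
    assume "\<not> length P \<ge> 2"
    then obtain x where "P = [x]" using ne by (cases P; cases "tl P") auto
    then show False using h l ab by simp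
  qed
  have d1: "distinct (L1 @ P @ L2)"
  proof -
    have "set P \<inter> set L1 = {}" "set P \<inter> set L2 = {}" "set L1 \<inter> set L2 = {}"
      using int dL by auto
    then show ?thesis using dP dL by auto
  qed
  have hd1: "hd (L1 @ P @ L2) = hd (L1 @ a # b # L2)" using ne h by (cases L1) auto
  have last1: "last (L1 @ P @ L2) = last (L1 @ a # b # L2)" using ne l by (cases L2) auto
  have set1: "set (L1 @ P @ L2) = set (L1 @ a # b # L2) \<union> set P" using aP by auto
  have len1: "length (L1 @ P @ L2) \<ge> length (L1 @ a # b # L2)" using lenP by simp
  have nL1: "a \<notin> set L1" "b \<notin> set L1" "a \<notin> set L2" "b \<notin> set L2" using dL by auto
  have c: "consec (L1 @ P @ L2) u v \<longleftrightarrow> (consec (L1 @ a # b # L2) u v \<and> {u,v} \<noteq> {a,b}) \<or> consec P u v" for u v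
  proof -
    have e1: "consec (L1 @ P @ L2) u v = (consec L1 u v \<or> consec P u v \<or> consec L2 u v
        \<or> (L1 \<noteq> [] \<and> {u,v} = {last L1, a}) \<or> (L2 \<noteq> [] \<and> {u,v} = {b, hd L2}))"
      using ne h l by (simp add: consec_append) blast
    have e2: "consec (L1 @ a # b # L2) u v = (consec L1 u v \<or> {u,v} = {a,b} \<or> consec L2 u v
        \<or> (L1 \<noteq> [] \<and> {u,v} = {last L1, a}) \<or> (L2 \<noteq> [] \<and> {u,v} = {b, hd L2}))"
      by (simp add: consec_append consec_Cons) blast
    have x: "{u,v} = {a,b} \<Longrightarrow> \<not> (consec L1 u v \<or> consec L2 u v
        \<or> (L1 \<noteq> [] \<and> {u,v} = {last L1, a}) \<or> (L2 \<noteq> [] \<and> {u,v} = {b, hd L2}) \<or> consec P u v)"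
    proof
      assume uv: "{u,v} = {a,b}"
      assume "consec L1 u v \<or> consec L2 u v
        \<or> (L1 \<noteq> [] \<and> {u,v} = {last L1, a}) \<or> (L2 \<noteq> [] \<and> {u,v} = {b, hd L2}) \<or> consec P u v"
      then show False
      proof (elim disjE conjE)
        assume "consec L1 u v" then show False using consec_in uv nL1 by (metis insertI1 doubleton_eq_iff)
      next
        assume "consec L2 u v" then show False using consec_in uv nL1 by (metis insertI1 doubleton_eq_iff)
      next
        assume "L1 \<noteq> []" "{u,v} = {last L1, a}"
        then have "last L1 = b" using uv ab by (metis doubleton_eq_iff)
        then show False using \<open>L1 \<noteq> []\<close> nL1 last_in_set by metis
      next
        assume "L2 \<noteq> []" "{u,v} = {b, hd L2}"
        then have "hd L2 = a" using uv ab by (metis doubleton_eq_iff)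
        then show False using \<open>L2 \<noteq> []\<close> nL1 hd_in_set by metis
      next
        assume "consec P u v" then show False using uv nab consec_sym by (metis doubleton_eq_iff)
      qed
    qed
    show ?thesis using e1 e2 x by blast
  qed
  show ?thesis using d1 hd1 last1 set1 len1 c by blast
qed


lemma split2: "Suc i < length L \<Longrightarrow> L = take i L @ L!i # L!(Suc i) # drop (Suc (Suc i)) L"
  by (metis Cons_nth_drop_Suc Suc_lessD append_take_drop_id)

lemma splice:
  assumes dL: "distinct L" and c: "consec L a b" and dP: "distinct P" and ne: "P \<noteq> []"
    and h: "hd P = a" and l: "last P = b"
    and int: "set P \<inter> set L = {a,b}" and nab: "\<not> consec P a b"
  shows "\<exists>L'. distinct L' \<and> hd L' = hd L \<and> last L' = last L \<and> set L' = set L \<union> set P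
     \<and> length L' \<ge> length L
     \<and> (\<forall>u v. consec L' u v \<longleftrightarrow> (consec L u v \<and> {u,v} \<noteq> {a,b}) \<or> consec P u v)"
proof -
  obtain i where i: "Suc i < length L" "(L ! i = a \<and> L ! Suc i = b) \<or> (L ! i = b \<and> L ! Suc i = a)"
    using c unfolding consec_def by blast
  define L1 where "L1 = take i L"
  define L2 where "L2 = drop (Suc (Suc i)) L"
  have L: "L = L1 @ L!i # L!(Suc i) # L2" unfolding L1_def L2_def using split2[OF i(1)] .
  from i(2) show ?thesis
  proof
    assume "L ! i = a \<and> L ! Suc i = b"
    then have L': "L = L1 @ a # b # L2" using L by simp
    have H: "distinct (L1 @ P @ L2) \<and> hd (L1 @ P @ L2) = hd (L1 @ a # b # L2)
     \<and> last (L1 @ P @ L2) = last (L1 @ a # b # L2)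
     \<and> set (L1 @ P @ L2) = set (L1 @ a # b # L2) \<union> set P
     \<and> length (L1 @ P @ L2) \<ge> length (L1 @ a # b # L2)
     \<and> (\<forall>u v. consec (L1 @ P @ L2) u v \<longleftrightarrow> (consec (L1 @ a # b # L2) u v \<and> {u,v} \<noteq> {a,b}) \<or> consec P u v)"
      using splice_core[of L1 a b L2 P] dL dP ne h l int nab unfolding L' by blast
    show ?thesis unfolding L' by (rule exI[of _ "L1 @ P @ L2"]) (rule H)
  next
    assume "L ! i = b \<and> L ! Suc i = a"
    then have L': "L = L1 @ b # a # L2" using L by simp
    have int': "set (rev P) \<inter> set (L1 @ b # a # L2) = {b,a}" using int L' by auto
    have dL': "distinct (L1 @ b # a # L2)" using dL L' by simp
    have H: "distinct (L1 @ (rev P) @ L2) \<and> hd (L1 @ (rev P) @ L2) = hd (L1 @ b # a # L2)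
     \<and> last (L1 @ (rev P) @ L2) = last (L1 @ b # a # L2)
     \<and> set (L1 @ (rev P) @ L2) = set (L1 @ b # a # L2) \<union> set (rev P)
     \<and> length (L1 @ (rev P) @ L2) \<ge> length (L1 @ b # a # L2)
     \<and> (\<forall>u v. consec (L1 @ (rev P) @ L2) u v \<longleftrightarrow> (consec (L1 @ b # a # L2) u v \<and> {u,v} \<noteq> {b,a}) \<or> consec (rev P) u v)"
      apply (rule splice_core[OF dL'])
      using dP ne h l nab int' by (auto simp: hd_rev last_rev consec_sym[of P b a])
    have ba: "{b,a} = {a,b}" by auto
    have H2: "distinct (L1 @ (rev P) @ L2) \<and> hd (L1 @ (rev P) @ L2) = hd (L1 @ b # a # L2)
     \<and> last (L1 @ (rev P) @ L2) = last (L1 @ b # a # L2)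
     \<and> set (L1 @ (rev P) @ L2) = set (L1 @ b # a # L2) \<union> set P
     \<and> length (L1 @ (rev P) @ L2) \<ge> length (L1 @ b # a # L2)
     \<and> (\<forall>u v. consec (L1 @ (rev P) @ L2) u v \<longleftrightarrow> (consec (L1 @ b # a # L2) u v \<and> {u,v} \<noteq> {a,b}) \<or> consec P u v)"
      using H unfolding ba set_rev consec_rev .
    show ?thesis unfolding L' by (rule exI[of _ "L1 @ rev P @ L2"]) (rule H2)
  qed
qed

lemma consec_cyc_rot: "consec_cyc (x # L2 @ L1) u v = consec_cyc (L1 @ x # L2) u v"
  using consec_cyc_swap'[of L1 "x # L2" u v] by simp

lemma consec_cyc_in: "consec_cyc cs u v \<Longrightarrow> u \<in> set cs \<and> v \<in> set cs"
proof -
  assume "consec_cyc cs u v"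
  then obtain i where i: "i < length cs" "{cs ! i, cs ! ((i + 1) mod length cs)} = {u, v}"
    unfolding consec_cyc_def by blast
  have "0 < length cs" using i(1) by (cases cs) auto
  then have "(i + 1) mod length cs < length cs" by simp
  then have "cs ! i \<in> set cs" "cs ! ((i + 1) mod length cs) \<in> set cs" using i(1) by simp_all
  then have "{cs ! i, cs ! ((i + 1) mod length cs)} \<subseteq> set cs" by simp
  then show ?thesis unfolding i(2) by simp
qed

lemma cyc_rotate:
  assumes d: "distinct cs" and len: "length cs \<ge> 3" and c: "consec_cyc cs a b" and ab: "a \<noteq> b"
  shows "\<exists>cs2 R. distinct cs2 \<and> set cs2 = set cs \<and> length cs2 = length cs \<and>
     (\<forall>u v. consec_cyc cs2 u v = consec_cyc cs u v) \<and> R \<noteq> [] \<and> (cs2 = a # b # R \<or> cs2 = b # a # R)"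
proof -
  have "a \<in> set cs" using consec_cyc_in[OF c] by blast
  then obtain L1 L2 where cs: "cs = L1 @ a # L2" by (meson split_list)
  define R where "R = L2 @ L1"
  have cr: "consec_cyc (a # R) u v = consec_cyc cs u v" for u v unfolding R_def cs by (rule consec_cyc_rot)
  have dR: "distinct (a # R)" using d cs R_def by auto
  have sR: "set (a # R) = set cs" using cs R_def by auto
  have lR: "length (a # R) = length cs" using cs R_def by auto
  have Rne: "R \<noteq> []" using lR len by auto
  have "consec_cyc (a # R) a b" using cr c by simp
  moreover have "consec_cyc (a#R) a b = (consec (a#R) a b \<or> {a,b} = {last (a#R), hd (a#R)})"
    by (rule consec_cyc_alt) simp
  ultimately have "consec (a # R) a b \<or> {a,b} = {last (a#R), hd (a#R)}" by simp
  then have "hd R = b \<or> last R = b"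
  proof
    assume "consec (a # R) a b"
    then have "{a,b} = {a, hd R} \<or> consec R a b" using Rne by (simp add: consec_Cons)
    moreover have "\<not> consec R a b" using dR consec_in[of R a b] by auto
    ultimately have "{a,b} = {a, hd R}" by simp
    then show ?thesis using ab by (simp add: doubleton_eq_iff)
  next
    assume "{a,b} = {last (a#R), hd (a#R)}"
    then have "{a,b} = {last R, a}" using Rne by simp
    then show ?thesis using ab by (simp add: doubleton_eq_iff)
  qed
  then show ?thesis
  proof
    assume "hd R = b"
    then obtain R' where R': "R = b # R'" using Rne by (cases R) auto
    have "R' \<noteq> []" using lR len R' by auto
    then show ?thesis using dR sR lR cr unfolding R'
      by (intro exI[of _ "a # b # R'"] exI[of _ R']) simp
  next
    assume "last R = b"
    then obtain R' where R': "R = R' @ [b]" using Rne by (metis append_butlast_last_id)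
    have "R' \<noteq> []" using lR len R' by auto
    have cr2: "consec_cyc (b # a # R') u v = consec_cyc cs u v" for u v
      using consec_cyc_swap'[of "[b]" "a # R'" u v] cr[of u v] R' by simp
    have "distinct (b # a # R')" "set (b # a # R') = set cs" "length (b # a # R') = length cs"
      using dR sR lR R' by auto
    then show ?thesis using cr2 \<open>R' \<noteq> []\<close>
      by (intro exI[of _ "b # a # R'"] exI[of _ R']) simp
  qed
qed

lemma prop1: "(D \<Longrightarrow> \<not> E) \<Longrightarrow> (((C \<and> \<not>E) \<or> Pp) \<or> D) = ((C \<or> D) \<and> \<not> E \<or> Pp)"
  by blast

lemma cyc_splice:
  assumes d: "distinct cs" and len: "length cs \<ge> 3" and c: "consec_cyc cs a b" and ab: "a \<noteq> b"
    and dP: "distinct P" and ne: "P \<noteq> []"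
    and h: "hd P = a" and l: "last P = b"
    and int: "set P \<inter> set cs = {a,b}" and nab: "\<not> consec P a b"
  shows "\<exists>cs'. distinct cs' \<and> set cs' = set cs \<union> set P \<and> length cs' \<ge> length cs
     \<and> (\<forall>u v. consec_cyc cs' u v \<longleftrightarrow> (consec_cyc cs u v \<and> {u,v} \<noteq> {a,b}) \<or> consec P u v)"
proof -
  obtain cs2 R where c2: "distinct cs2" "set cs2 = set cs" "length cs2 = length cs"
     "\<And>u v. consec_cyc cs2 u v = consec_cyc cs u v" "R \<noteq> []" "cs2 = a # b # R \<or> cs2 = b # a # R"
    using cyc_rotate[OF d len c ab] by blast
  have cab: "consec cs2 a b" using c2(6) c2(5) by (auto simp: consec_Cons)
  have lastn: "last cs2 \<notin> {a,b}"
  proof -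
    have "last cs2 = last R" "last R \<in> set R" using c2(6) c2(5) by auto
    moreover have "a \<notin> set R" "b \<notin> set R" using c2(6) c2(1) by auto
    ultimately show ?thesis by auto
  qed
  have hdab: "hd cs2 \<in> {a,b}" using c2(6) by auto
  have int2: "set P \<inter> set cs2 = {a,b}" using int c2(2) by simp
  from splice[OF c2(1) cab dP ne h l int2 nab] obtain L' where L'0: "distinct L' \<and> hd L' = hd cs2 \<and> last L' = last cs2 \<and> set L' = set cs2 \<union> set P
     \<and> length L' \<ge> length cs2
     \<and> (\<forall>u v. consec L' u v \<longleftrightarrow> (consec cs2 u v \<and> {u,v} \<noteq> {a,b}) \<or> consec P u v)" ..
  have L': "distinct L'" "hd L' = hd cs2" "last L' = last cs2" "set L' = set cs2 \<union> set P"
     "length L' \<ge> length cs2"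
     "\<And>u v. consec L' u v \<longleftrightarrow> (consec cs2 u v \<and> {u,v} \<noteq> {a,b}) \<or> consec P u v"
    using L'0 by blast+
  have cs2ne: "cs2 \<noteq> []" using c2(6) by auto
  have L'ne: "L' \<noteq> []" using L'(4) cs2ne by auto
  have key: "consec_cyc L' u v \<longleftrightarrow> (consec_cyc cs u v \<and> {u,v} \<noteq> {a,b}) \<or> consec P u v" for u v
  proof -
    have e1: "consec_cyc L' u v = (consec L' u v \<or> {u,v} = {last cs2, hd cs2})"
      using consec_cyc_alt[OF L'ne] L'(2,3) by simp
    have e2: "consec_cyc cs u v = (consec cs2 u v \<or> {u,v} = {last cs2, hd cs2})"
      using consec_cyc_alt[OF cs2ne] c2(4) by simp
    have e3: "{u,v} = {last cs2, hd cs2} \<Longrightarrow> {u,v} \<noteq> {a,b}"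
      using lastn by (metis insertCI)
    show ?thesis unfolding e1 e2 L'(6) using e3 by (rule prop1)
  qed
  have "set L' = set cs \<union> set P" "length L' \<ge> length cs" using L'(4,5) c2(2,3) by auto
  moreover have "\<forall>u v. consec_cyc L' u v \<longleftrightarrow> (consec_cyc cs u v \<and> {u,v} \<noteq> {a,b}) \<or> consec P u v"
    using key by blast
  ultimately show ?thesis using L'(1) by (intro exI[of _ L'] conjI)
qed

lemma isk4_agree:
  fixes E E' :: "'a \<Rightarrow> 'a \<Rightarrow> bool"
  assumes ag: "\<forall>u\<in>X. \<forall>v\<in>X. E u v = E' u v" and h: "isk4_in E X"
  shows "isk4_in E' X"
proof -
  obtain b :: "nat \<Rightarrow> 'a" and p :: "nat \<Rightarrow> nat \<Rightarrow> 'a list" where H: "inj_on b {..<4} \<and>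
     (\<forall>i j. i < j \<and> j < 4 \<longrightarrow>
        distinct (p i j) \<and> length (p i j) \<ge> 2 \<and> hd (p i j) = b i \<and> last (p i j) = b j \<and>
        set (butlast (tl (p i j))) \<inter> b ` {..<4} = {}) \<and>
     (\<forall>i j k l. i < j \<and> j < 4 \<and> k < l \<and> l < 4 \<and> (i, j) \<noteq> (k, l) \<longrightarrow>
        set (p i j) \<inter> set (p k l) \<subseteq> b ` {..<4}) \<and>
     X = (\<Union>i<4. \<Union>j\<in>{i<..<4}. set (p i j)) \<and>
     (\<forall>u\<in>X. \<forall>v\<in>X. u \<noteq> v \<longrightarrow>
        (E u v \<longleftrightarrow> (\<exists>i j. i < j \<and> j < 4 \<and> consec (p i j) u v)))"
    using h unfolding isk4_in_def by (elim exE) (rule that)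
  from H have c1: "inj_on b {..<4}" by (rule conjunct1)
  from H have c2: "\<forall>i j. i < j \<and> j < 4 \<longrightarrow>
        distinct (p i j) \<and> length (p i j) \<ge> 2 \<and> hd (p i j) = b i \<and> last (p i j) = b j \<and>
        set (butlast (tl (p i j))) \<inter> b ` {..<4} = {}" by (elim conjE)
  from H have c3: "\<forall>i j k l. i < j \<and> j < 4 \<and> k < l \<and> l < 4 \<and> (i, j) \<noteq> (k, l) \<longrightarrow>
        set (p i j) \<inter> set (p k l) \<subseteq> b ` {..<4}" by (elim conjE)
  from H have c4: "X = (\<Union>i<4. \<Union>j\<in>{i<..<4}. set (p i j))" by (elim conjE)
  from H have c5: "\<forall>u\<in>X. \<forall>v\<in>X. u \<noteq> v \<longrightarrow>
        (E u v \<longleftrightarrow> (\<exists>i j. i < j \<and> j < 4 \<and> consec (p i j) u v))" by (elim conjE)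
  have c5': "\<forall>u\<in>X. \<forall>v\<in>X. u \<noteq> v \<longrightarrow>
        (E' u v \<longleftrightarrow> (\<exists>i j. i < j \<and> j < 4 \<and> consec (p i j) u v))"
  proof (intro ballI impI)
    fix u v assume uv: "u \<in> X" "v \<in> X" "u \<noteq> v"
    then have "E' u v = E u v" using ag by simp
    then show "E' u v \<longleftrightarrow> (\<exists>i j. i < j \<and> j < 4 \<and> consec (p i j) u v)" using c5 uv by simp
  qed
  show ?thesis unfolding isk4_in_def
    by (rule exI[of _ b], rule exI[of _ p]) (intro conjI c1 c2 c3 c4 c5')
qed

lemma hole_agree:
  assumes ag: "\<forall>u\<in>H. \<forall>v\<in>H. E u v = E' u v" and h: "hole E H"
  shows "hole E' H"
proof -
  from h obtain cs where h0: "distinct cs \<and> length cs \<ge> 4 \<and> set cs = H \<and>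
     (\<forall>u\<in>H. \<forall>v\<in>H. u \<noteq> v \<longrightarrow> (E u v \<longleftrightarrow> consec_cyc cs u v))"
    unfolding hole_def by (elim exE) (rule that)
  from h0 have h1: "distinct cs" "length cs \<ge> 4" "set cs = H" by auto
  from h0 have h2: "\<forall>u\<in>H. \<forall>v\<in>H. u \<noteq> v \<longrightarrow> (E u v \<longleftrightarrow> consec_cyc cs u v)" by (elim conjE)
  have h3: "\<forall>u\<in>H. \<forall>v\<in>H. u \<noteq> v \<longrightarrow> (E' u v \<longleftrightarrow> consec_cyc cs u v)"
    using h2 ag by simp
  show ?thesis unfolding hole_def
    by (rule exI[of _ cs]) (intro conjI h1 h3)
qed

lemma wheel_agree:
  assumes ag: "\<forall>u\<in>X. \<forall>v\<in>X. E u v = E' u v" and h: "wheel_in E X"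
  shows "wheel_in E' X"
proof -
  from h obtain H c where w: "X = insert c H" "c \<notin> H" "hole E H" "card {v \<in> H. E c v} \<ge> 3"
    unfolding wheel_in_def by blast
  have "hole E' H" using hole_agree[OF _ w(3)] ag w(1) by blast
  moreover have "{v \<in> H. E' c v} = {v \<in> H. E c v}" using ag w(1) by auto
  ultimately show ?thesis unfolding wheel_in_def using w by (intro exI[of _ H] exI[of _ c]) simp
qed

lemma pairs4: "((i::nat) < j \<and> j < 4) \<longleftrightarrow>
   (i = 0 \<and> j = 1) \<or> (i = 0 \<and> j = 2) \<or> (i = 0 \<and> j = 3) \<or> (i = 1 \<and> j = 2) \<or> (i = 1 \<and> j = 3) \<or> (i = 2 \<and> j = 3)"
  by auto

lemma ex_pairs4: "(\<exists>i j. (i::nat) < j \<and> j < 4 \<and> P i j) \<longleftrightarrow> P 0 1 \<or> P 0 2 \<or> P 0 3 \<or> P 1 2 \<or> P 1 3 \<or> P 2 3"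
proof
  assume "\<exists>i j. (i::nat) < j \<and> j < 4 \<and> P i j"
  then obtain i j where "i < j \<and> j < 4" "P i j" by blast
  then show "P 0 1 \<or> P 0 2 \<or> P 0 3 \<or> P 1 2 \<or> P 1 3 \<or> P 2 3" unfolding pairs4 by auto
next
  assume "P 0 1 \<or> P 0 2 \<or> P 0 3 \<or> P 1 2 \<or> P 1 3 \<or> P 2 3"
  then show "\<exists>i j. (i::nat) < j \<and> j < 4 \<and> P i j"
    apply (elim disjE)
    apply (rule exI[of _ 0], rule exI[of _ 1], simp)
    apply (rule exI[of _ 0], rule exI[of _ 2], simp)
    apply (rule exI[of _ 0], rule exI[of _ 3], simp)
    apply (rule exI[of _ 1], rule exI[of _ 2], simp)
    apply (rule exI[of _ 1], rule exI[of _ 3], simp)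
    apply (rule exI[of _ 2], rule exI[of _ 3], simp)
    done
qed

lemma all_pairs4: "(\<forall>i j. (i::nat) < j \<and> j < 4 \<longrightarrow> P i j) \<longleftrightarrow> P 0 1 \<and> P 0 2 \<and> P 0 3 \<and> P 1 2 \<and> P 1 3 \<and> P 2 3"
proof
  assume "\<forall>i j. (i::nat) < j \<and> j < 4 \<longrightarrow> P i j"
  then show "P 0 1 \<and> P 0 2 \<and> P 0 3 \<and> P 1 2 \<and> P 1 3 \<and> P 2 3" by simp
next
  assume h: "P 0 1 \<and> P 0 2 \<and> P 0 3 \<and> P 1 2 \<and> P 1 3 \<and> P 2 3"
  show "\<forall>i j. (i::nat) < j \<and> j < 4 \<longrightarrow> P i j"
  proof (intro allI impI)
    fix i j :: nat assume "i < j \<and> j < 4"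
    then have "(i = 0 \<and> j = 1) \<or> (i = 0 \<and> j = 2) \<or> (i = 0 \<and> j = 3) \<or> (i = 1 \<and> j = 2) \<or> (i = 1 \<and> j = 3) \<or> (i = 2 \<and> j = 3)"
      unfolding pairs4 .
    then show "P i j" using h by (elim disjE conjE; simp)
  qed
qed

lemma union_pairs4: "(\<Union>i<(4::nat). \<Union>j\<in>{i<..<4}. f i j) = f 0 1 \<union> f 0 2 \<union> f 0 3 \<union> f 1 2 \<union> f 1 3 \<union> f 2 3"
proof (rule set_eqI)
  fix x
  have "x \<in> (\<Union>i<(4::nat). \<Union>j\<in>{i<..<4}. f i j) \<longleftrightarrow> (\<exists>i j. (i::nat) < j \<and> j < 4 \<and> x \<in> f i j)"
    by force
  also have "\<dots> \<longleftrightarrow> x \<in> f 0 1 \<or> x \<in> f 0 2 \<or> x \<in> f 0 3 \<or> x \<in> f 1 2 \<or> x \<in> f 1 3 \<or> x \<in> f 2 3"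
    by (rule ex_pairs4)
  finally show "x \<in> (\<Union>i<(4::nat). \<Union>j\<in>{i<..<4}. f i j) \<longleftrightarrow> x \<in> f 0 1 \<union> f 0 2 \<union> f 0 3 \<union> f 1 2 \<union> f 1 3 \<union> f 2 3"
    by simp
qed

lemma lessThan4: "{..<(4::nat)} = {0,1,2,3}" by auto

lemma prop_swap: "(A \<or> B \<or> C) = (A \<or> C \<or> B)" by blast

lemma consec_join: "consec (xs @ m # ys) u v = (consec (xs @ [m]) u v \<or> consec (m # ys) u v)"
  by (simp add: consec_append) (rule prop_swap)

lemma arc_decomp: "consec_cyc (s # R1 @ x # R2 @ y # R3) u v =
   (consec (s # R1 @ [x]) u v \<or> consec (x # R2 @ [y]) u v \<or> consec (y # R3 @ [s]) u v)"
proof -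
  have e1: "consec_cyc (s # R1 @ x # R2 @ y # R3) u v =
     (consec (s # R1 @ x # R2 @ y # R3) u v \<or> {u,v} = {last (y # R3), s})"
    by (subst consec_cyc_alt) auto
  have e2: "consec (s # R1 @ x # R2 @ y # R3) u v =
      (consec (s # R1 @ [x]) u v \<or> consec (x # R2 @ [y]) u v \<or> consec (y # R3) u v)"
    using consec_join[of "s # R1" x "R2 @ y # R3"] consec_join[of "x # R2" y R3] by simp
  have e3: "consec (y # R3 @ [s]) u v = (consec (y # R3) u v \<or> {u,v} = {last (y # R3), s})"
    using consec_append[of "y # R3" "[s]"] by simp
  show ?thesis unfolding e1 e2 e3 by (simp only: disj_assoc)
qed

lemma dbl_same: "c \<noteq> s \<Longrightarrow> ({c,v} = {c,s}) = (v = s)"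
  by (auto simp: doubleton_eq_iff)

lemma spoke_consec: "consec [c,s] u v \<longleftrightarrow> {u,v} = {c,s}"
  by (simp add: consec_Cons)

lemma w3_core:
  fixes c s x y :: 'a and R1 R2 R3 :: "'a list" and E :: "'a \<Rightarrow> 'a \<Rightarrow> bool"
  defines "cs \<equiv> s # R1 @ x # R2 @ y # R3"
  assumes d: "distinct cs"
    and hc: "\<forall>u\<in>set cs. \<forall>v\<in>set cs. u \<noteq> v \<longrightarrow> (E u v \<longleftrightarrow> consec_cyc cs u v)"
    and cn: "c \<notin> set cs"
    and sp: "\<forall>v\<in>set cs. E c v \<longleftrightarrow> (v = s \<or> v = x \<or> v = y)"
    and sym: "\<And>u v. E u v = E v u"
  shows "isk4_in E (insert c (set cs))"
proof -
  have dd: "s \<noteq> x" "s \<noteq> y" "x \<noteq> y" "s \<notin> set R1" "s \<notin> set R2" "s \<notin> set R3"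
    "x \<notin> set R1" "x \<notin> set R2" "x \<notin> set R3" "y \<notin> set R1" "y \<notin> set R2" "y \<notin> set R3"
    "set R1 \<inter> set R2 = {}" "set R1 \<inter> set R3 = {}" "set R2 \<inter> set R3 = {}"
    "distinct R1" "distinct R2" "distinct R3"
    using d unfolding cs_def by auto
  have cc: "c \<noteq> s" "c \<noteq> x" "c \<noteq> y" "c \<notin> set R1" "c \<notin> set R2" "c \<notin> set R3"
    using cn unfolding cs_def by auto
  define bb :: "nat \<Rightarrow> 'a" where "bb n = (if n = 0 then c else if n = 1 then s else if n = 2 then x else y)" for n
  define pp :: "nat \<Rightarrow> nat \<Rightarrow> 'a list" where "pp i j = (if i = 0 then (if j = 1 then [c,s] else if j = 2 then [c,x] else [c,y])
     else if i = 1 then (if j = 2 then s # R1 @ [x] else s # rev R3 @ [y]) else x # R2 @ [y])" for i j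
  have b: "bb 0 = c" "bb 1 = s" "bb 2 = x" "bb 3 = y" unfolding bb_def by simp_all
  have p: "pp 0 1 = [c,s]" "pp 0 2 = [c,x]" "pp 0 3 = [c,y]" "pp 1 2 = s # R1 @ [x]"
    "pp 1 3 = s # rev R3 @ [y]" "pp 2 3 = x # R2 @ [y]" unfolding pp_def by simp_all
  have bimg: "bb ` {..<4} = {c,s,x,y}" unfolding lessThan4 using b by simp
  have inj: "inj_on bb {..<4}" unfolding lessThan4 inj_on_def using b dd cc by auto
  have C2: "\<forall>i j. i < j \<and> j < 4 \<longrightarrow>
        distinct (pp i j) \<and> length (pp i j) \<ge> 2 \<and> hd (pp i j) = bb i \<and> last (pp i j) = bb j \<and>
        set (butlast (tl (pp i j))) \<inter> bb ` {..<4} = {}"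
    unfolding all_pairs4 p b bimg using dd cc by (simp add: butlast_append)
  have C3: "\<forall>i j k l. i < j \<and> j < 4 \<and> k < l \<and> l < 4 \<and> (i, j) \<noteq> (k, l) \<longrightarrow>
        set (pp i j) \<inter> set (pp k l) \<subseteq> bb ` {..<4}"
  proof (intro allI impI)
    fix i j k l :: nat
    assume h: "i < j \<and> j < 4 \<and> k < l \<and> l < 4 \<and> (i, j) \<noteq> (k, l)"
    then have h1: "(i = 0 \<and> j = 1) \<or> (i = 0 \<and> j = 2) \<or> (i = 0 \<and> j = 3) \<or> (i = 1 \<and> j = 2) \<or> (i = 1 \<and> j = 3) \<or> (i = 2 \<and> j = 3)"
      and h2: "(k = 0 \<and> l = 1) \<or> (k = 0 \<and> l = 2) \<or> (k = 0 \<and> l = 3) \<or> (k = 1 \<and> l = 2) \<or> (k = 1 \<and> l = 3) \<or> (k = 2 \<and> l = 3)"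
      using pairs4 by blast+
    have ne: "(i, j) \<noteq> (k, l)" using h by blast
    show "set (pp i j) \<inter> set (pp k l) \<subseteq> bb ` {..<4}"
      unfolding bimg using h1 h2 ne
      by (elim disjE conjE; simp only: p; use dd cc in auto)
  qed
  have C4: "insert c (set cs) = (\<Union>i<4. \<Union>j\<in>{i<..<4}. set (pp i j))"
    unfolding union_pairs4 p cs_def by auto
  have C5: "\<forall>u\<in>insert c (set cs). \<forall>v\<in>insert c (set cs). u \<noteq> v \<longrightarrow>
        (E u v \<longleftrightarrow> (\<exists>i j. i < j \<and> j < 4 \<and> consec (pp i j) u v))"
  proof (intro ballI impI)
    fix u v assume u: "u \<in> insert c (set cs)" and v: "v \<in> insert c (set cs)" and uv: "u \<noteq> v"
    have r13: "consec (s # rev R3 @ [y]) u v = consec (y # R3 @ [s]) u v"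
      using consec_rev[of "y # R3 @ [s]" u v] by simp
    have arcs: "consec_cyc cs u v = (consec (s # R1 @ [x]) u v \<or> consec (x # R2 @ [y]) u v \<or> consec (y # R3 @ [s]) u v)"
      unfolding cs_def by (rule arc_decomp)
    have rhs: "(\<exists>i j. i < j \<and> j < 4 \<and> consec (pp i j) u v) = ({u,v} = {c,s} \<or> {u,v} = {c,x} \<or> {u,v} = {c,y} \<or>
       consec_cyc cs u v)"
    proof -
      have arcs': "consec_cyc cs u v = (consec (s # R1 @ [x]) u v \<or> consec (y # R3 @ [s]) u v \<or> consec (x # R2 @ [y]) u v)"
        unfolding arcs by (rule prop_swap)
      show ?thesis unfolding ex_pairs4 p spoke_consec r13 arcs' by (simp only: disj_assoc)
    qed
    have cnarc: "\<not> consec (s # R1 @ [x]) c w" "\<not> consec (x # R2 @ [y]) c w" "\<not> consec (y # R3 @ [s]) c w" for w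
      using consec_in cc by fastforce+
    show "E u v \<longleftrightarrow> (\<exists>i j. i < j \<and> j < 4 \<and> consec (pp i j) u v)"
      unfolding rhs
    proof (cases "u = c")
      case True
      then have vc: "v \<in> set cs" using v uv by auto
      have "consec_cyc cs c v = False" using cnarc arcs True by simp
      then show "E u v = ({u, v} = {c, s} \<or> {u, v} = {c, x} \<or> {u, v} = {c, y} \<or> consec_cyc cs u v)"
        using True sp vc cc by (simp add: dbl_same)
    next
      case False
      note uc = False
      show "E u v = ({u, v} = {c, s} \<or> {u, v} = {c, x} \<or> {u, v} = {c, y} \<or> consec_cyc cs u v)"
      proof (cases "v = c")
        case True
        then have uc': "u \<in> set cs" using u uv by auto
        have "consec_cyc cs u c = False" using cnarc arcs True consec_sym by metis
        moreover have "{u,c} = {c,w} \<longleftrightarrow> u = w" if "c \<noteq> w" for w using dbl_same[OF that, of u] by (simp add: insert_commute)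
        ultimately show ?thesis using True sp uc' cc sym[of u c] by simp
      next
        case False
        then have "u \<in> set cs" "v \<in> set cs" using u v uc by auto
        moreover have "{u,v} \<noteq> {c,w}" for w using uc False by (auto simp: doubleton_eq_iff)
        ultimately show ?thesis using hc uv by simp
      qed
    qed
  qed
  show ?thesis unfolding isk4_in_def
    by (rule exI[of _ bb], rule exI[of _ pp]) (intro conjI inj C2 C3 C4 C5)
qed

lemma w3:
  fixes E :: "'a \<Rightarrow> 'a \<Rightarrow> bool"
  assumes ho: "hole E H" and cH: "c \<notin> H" and c3: "card {v \<in> H. E c v} = 3"
    and sym: "\<And>u v. E u v = E v u"
  shows "isk4_in E (insert c H)"
proof -
  from ho obtain cs where h0: "distinct cs \<and> length cs \<ge> 4 \<and> set cs = H \<and>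
     (\<forall>u\<in>H. \<forall>v\<in>H. u \<noteq> v \<longrightarrow> (E u v \<longleftrightarrow> consec_cyc cs u v))"
    unfolding hole_def by (elim exE) (rule that)
  from h0 have dcs: "distinct cs" and scs: "set cs = H" by auto
  from h0 have hc: "\<forall>u\<in>H. \<forall>v\<in>H. u \<noteq> v \<longrightarrow> (E u v \<longleftrightarrow> consec_cyc cs u v)" by (elim conjE)
  from c3 obtain s x y where S: "{v \<in> H. E c v} = {s,x,y}" "s \<noteq> x" "x \<noteq> y" "s \<noteq> y"
    unfolding card_3_iff by blast
  have sp: "\<forall>v\<in>H. E c v \<longleftrightarrow> (v = s \<or> v = x \<or> v = y)" using S(1) by blast
  have sxy: "s \<in> H" "x \<in> H" "y \<in> H" using S(1) by blast+
  obtain L1 L2 where cs: "cs = L1 @ s # L2" using sxy(1) scs by (metis split_list)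
  define R where "R = L2 @ L1"
  have cr: "consec_cyc (s # R) u v = consec_cyc cs u v" for u v unfolding R_def cs by (rule consec_cyc_rot)
  have sR: "set (s # R) = H" using cs R_def scs by auto
  have dR: "distinct (s # R)" using dcs cs R_def by auto
  have xR: "x \<in> set R" "y \<in> set R" using sR sxy S by auto
  obtain R1 R' where R: "R = R1 @ x # R'" using xR(1) by (metis split_list)
  have gen: "isk4_in E (insert c H)" if
     "s # R = s # Q1 @ a # Q2 @ b # Q3" "{a,b} = {x,y}" for Q1 Q2 Q3 a b
  proof -
    let ?cs = "s # Q1 @ a # Q2 @ b # Q3"
    have d2: "distinct ?cs" using dR that(1) by simp
    have s2: "set ?cs = H" using sR that(1) by simp
    have hc2: "\<forall>u\<in>set ?cs. \<forall>v\<in>set ?cs. u \<noteq> v \<longrightarrow> (E u v \<longleftrightarrow> consec_cyc ?cs u v)"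
      using hc cr that(1) s2 by simp
    have cn2: "c \<notin> set ?cs" using s2 cH by simp
    have sp2: "\<forall>v\<in>set ?cs. E c v \<longleftrightarrow> (v = s \<or> v = a \<or> v = b)"
      using sp s2 that(2) by (auto simp: doubleton_eq_iff)
    have "isk4_in E (insert c (set ?cs))"
      using w3_core[of s Q1 a Q2 b Q3 E c] d2 hc2 cn2 sp2 sym by blast
    then show ?thesis using s2 by simp
  qed
  show ?thesis
  proof (cases "y \<in> set R'")
    case True
    then obtain R2 R3 where "R' = R2 @ y # R3" by (metis split_list)
    then show ?thesis using gen[of R1 x R2 y R3] R by simp
  next
    case False
    then have "y \<in> set R1" using xR(2) R S(3) by auto
    then obtain R1a R1b where "R1 = R1a @ y # R1b" by (metis split_list)
    then show ?thesis using gen[of R1a y R1b x R'] R by (simp add: insert_commute)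
  qed
qed

lemma mem_U4: "x \<in> (\<Union>i<(4::nat). \<Union>j\<in>{i<..<4}. f i j) \<longleftrightarrow> (\<exists>i j. i < j \<and> j < 4 \<and> x \<in> f i j)"
  by force

locale subdiv =
  fixes E E' :: "'a \<Rightarrow> 'a \<Rightarrow> bool" and W :: "'a set" and a b :: 'a and P :: "'a list"
  assumes ab: "a \<noteq> b"
  and Eab: "E a b"
  and dP: "distinct P" and Pne: "P \<noteq> []" and hP: "hd P = a" and lP: "last P = b"
  and PW: "set P \<inter> W = {a,b}"
  and nab: "\<not> consec P a b"
  and agree: "\<And>u v. u \<in> W \<Longrightarrow> v \<in> W \<Longrightarrow> {u,v} \<noteq> {a,b} \<Longrightarrow> E' u v = E u v"
  and nE'ab: "\<not> E' a b"
  and newP: "\<And>u v. u \<in> set P \<Longrightarrow> u \<notin> W \<Longrightarrow> v \<in> W \<union> set P \<Longrightarrow> E' u v = consec P u v"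
  and symE: "\<And>u v. E u v = E v u" and symE': "\<And>u v. E' u v = E' v u"
begin

lemma abW: "a \<in> W" "b \<in> W" "a \<in> set P" "b \<in> set P" using PW by auto

lemma agreeX:
  assumes "X \<subseteq> W" "\<not> (a \<in> X \<and> b \<in> X)"
  shows "\<forall>u\<in>X. \<forall>v\<in>X. E u v = E' u v"
proof (intro ballI)
  fix u v assume uv: "u \<in> X" "v \<in> X"
  have "{u,v} \<noteq> {a,b}"
  proof
    assume "{u,v} = {a,b}"
    then have "a \<in> X" "b \<in> X" using uv by (auto simp: doubleton_eq_iff)
    then show False using assms(2) by blast
  qed
  then show "E u v = E' u v" using agree uv assms(1) by auto
qed

lemma edge_char:
  assumes XW: "Xs \<subseteq> W" and aX: "a \<in> Xs" and bX: "b \<in> Xs"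
    and old: "\<And>u v. u \<in> Xs \<Longrightarrow> v \<in> Xs \<Longrightarrow> u \<noteq> v \<Longrightarrow> E u v = Old u v"
    and new: "\<And>u v. New u v = ((Old u v \<and> {u,v} \<noteq> {a,b}) \<or> consec P u v)"
    and oldin: "\<And>u v. Old u v \<Longrightarrow> u \<in> Xs \<and> v \<in> Xs"
    and u: "u \<in> Xs \<union> set P" and v: "v \<in> Xs \<union> set P" and uv: "u \<noteq> v"
  shows "E' u v = New u v"
proof (cases "u \<in> W")
  case False
  then have uP: "u \<in> set P" "u \<notin> Xs" using u XW by auto
  have "E' u v = consec P u v" using newP[OF uP(1) False] v XW by auto
  moreover have "\<not> Old u v" using oldin uP(2) by blast
  ultimately show ?thesis using new by simp
next
  case uW: True
  show ?thesis
  proof (cases "v \<in> W")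
    case False
    then have vP: "v \<in> set P" "v \<notin> Xs" using v XW by auto
    have "E' v u = consec P v u" using newP[OF vP(1) False] u XW by auto
    then have "E' u v = consec P u v" using symE' consec_sym by metis
    moreover have "\<not> Old u v" using oldin vP(2) by blast
    ultimately show ?thesis using new by simp
  next
    case vW: True
    have uX: "u \<in> Xs"
    proof (cases "u \<in> Xs")
      case False
      then have "u \<in> set P \<inter> W" using u uW by auto
      then show ?thesis using PW aX bX by auto
    qed
    have vX: "v \<in> Xs"
    proof (cases "v \<in> Xs")
      case False
      then have "v \<in> set P \<inter> W" using v vW by auto
      then show ?thesis using PW aX bX by auto
    qed
    show ?thesis
    proof (cases "{u,v} = {a,b}")
      case True
      then have "(u = a \<and> v = b) \<or> (u = b \<and> v = a)" by (simp add: doubleton_eq_iff)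
      then have "\<not> E' u v" "\<not> consec P u v" using nE'ab nab symE' consec_sym by metis+
      then show ?thesis using new True by simp
    next
      case False
      have "\<not> consec P u v"
      proof
        assume "consec P u v"
        then have "u \<in> set P \<and> v \<in> set P" by (rule consec_in)
        then have "u \<in> {a,b}" "v \<in> {a,b}" using uW vW PW by auto
        then have "{u,v} = {a,b}" using uv by auto
        then show False using False by simp
      qed
      moreover have "E' u v = E u v" using agree[OF uW vW False] .
      ultimately show ?thesis using new old[OF uX vX uv] False by simp
    qed
  qed
qed

end

lemma ex_split_pair:
  assumes "(i::nat) < j" "j < 4"
  shows "(\<exists>k l. k < l \<and> l < 4 \<and> f k l) \<longleftrightarrow> f i j \<or> (\<exists>k l. k < l \<and> l < 4 \<and> (k,l) \<noteq> (i,j) \<and> f k l)"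
  using assms by blast

lemma prop3: "(D \<Longrightarrow> \<not> Oo) \<Longrightarrow> (((CL \<and> \<not> D) \<or> CP) \<or> Oo) = (((CL \<or> Oo) \<and> \<not> D) \<or> CP)"
  by blast

context subdiv
begin

lemma isk4_sub:
  assumes XW: "X \<subseteq> W" and h: "isk4_in E X"
  shows "\<exists>Y \<subseteq> X \<union> set P. isk4_in E' Y"
proof (cases "a \<in> X \<and> b \<in> X")
  case False
  then have "isk4_in E' X" using isk4_agree[OF agreeX[OF XW False] h] by simp
  then show ?thesis by blast
next
  case True
  then have aX: "a \<in> X" and bX: "b \<in> X" by auto
  obtain bb :: "nat \<Rightarrow> 'a" and pp :: "nat \<Rightarrow> nat \<Rightarrow> 'a list" where H: "inj_on bb {..<4} \<and>
     (\<forall>i j. i < j \<and> j < 4 \<longrightarrow>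
        distinct (pp i j) \<and> length (pp i j) \<ge> 2 \<and> hd (pp i j) = bb i \<and> last (pp i j) = bb j \<and>
        set (butlast (tl (pp i j))) \<inter> bb ` {..<4} = {}) \<and>
     (\<forall>i j k l. i < j \<and> j < 4 \<and> k < l \<and> l < 4 \<and> (i, j) \<noteq> (k, l) \<longrightarrow>
        set (pp i j) \<inter> set (pp k l) \<subseteq> bb ` {..<4}) \<and>
     X = (\<Union>i<4. \<Union>j\<in>{i<..<4}. set (pp i j)) \<and>
     (\<forall>u\<in>X. \<forall>v\<in>X. u \<noteq> v \<longrightarrow>
        (E u v \<longleftrightarrow> (\<exists>i j. i < j \<and> j < 4 \<and> consec (pp i j) u v)))"
    using h unfolding isk4_in_def by (elim exE) (rule that)
  from H have c1: "inj_on bb {..<4}" by (rule conjunct1)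
  from H have c2: "\<forall>i j. i < j \<and> j < 4 \<longrightarrow>
        distinct (pp i j) \<and> length (pp i j) \<ge> 2 \<and> hd (pp i j) = bb i \<and> last (pp i j) = bb j \<and>
        set (butlast (tl (pp i j))) \<inter> bb ` {..<4} = {}" by (elim conjE)
  from H have c3: "\<forall>i j k l. i < j \<and> j < 4 \<and> k < l \<and> l < 4 \<and> (i, j) \<noteq> (k, l) \<longrightarrow>
        set (pp i j) \<inter> set (pp k l) \<subseteq> bb ` {..<4}" by (elim conjE)
  from H have c4: "X = (\<Union>i<4. \<Union>j\<in>{i<..<4}. set (pp i j))" by (elim conjE)
  from H have c5: "\<forall>u\<in>X. \<forall>v\<in>X. u \<noteq> v \<longrightarrow>
        (E u v \<longleftrightarrow> (\<exists>i j. i < j \<and> j < 4 \<and> consec (pp i j) u v))" by (elim conjE)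
  have pin: "set (pp k l) \<subseteq> X" if "k < l" "l < 4" for k l
  proof
    fix z assume "z \<in> set (pp k l)"
    then show "z \<in> X" unfolding c4 mem_U4 using that by blast
  qed
  have pne: "pp k l \<noteq> []" if "k < l" "l < 4" for k l
    using c2 that by fastforce
  have BX: "bb ` {..<4} \<subseteq> X"
  proof
    fix z assume "z \<in> bb ` {..<4}"
    then obtain k where k: "k < 4" "z = bb k" by auto
    show "z \<in> X"
    proof (cases "k < 3")
      case True
      then have "hd (pp k 3) = bb k" using c2 by simp
      moreover have "pp k 3 \<noteq> []" using pne[of k 3] True by simp
      ultimately have "bb k \<in> set (pp k 3)" using hd_in_set by metis
      then show ?thesis using pin[of k 3] True k by auto
    next
      case False
      then have "k = 3" using k by simp
      then have "last (pp 0 3) = bb k" using c2 by simp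
      moreover have "pp 0 3 \<noteq> []" using pne[of 0 3] by simp
      ultimately have "bb k \<in> set (pp 0 3)" using last_in_set by metis
      then show ?thesis using pin[of 0 3] k by auto
    qed
  qed
  have injD: "m = n" if "m < 4" "n < 4" "bb m = bb n" for m n
    using c1 that by (auto dest: inj_onD)
  have endp: "z = bb k \<or> z = bb l" if "k < l" "l < 4" "z \<in> set (pp k l)" "z \<in> bb ` {..<4}" for k l z
  proof -
    have d: "distinct (pp k l)" "length (pp k l) \<ge> 2" "hd (pp k l) = bb k" "last (pp k l) = bb l"
      "set (butlast (tl (pp k l))) \<inter> bb ` {..<4} = {}" using c2 that(1,2) by auto
    have "z \<notin> set (butlast (tl (pp k l)))" using d(5) that(4) by blast
    then have "z \<in> {hd (pp k l), last (pp k l)}" using inner_set[OF d(1,2)] that(3) by blast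
    then show ?thesis using d(3,4) by simp
  qed
  have "\<exists>i j. i < j \<and> j < 4 \<and> consec (pp i j) a b" using c5[rule_format, OF aX bX ab] Eab by simp
  then obtain i j where ij: "i < j" "j < 4" "consec (pp i j) a b" by blast
  define L where "L = pp i j"
  have L: "distinct L" "length L \<ge> 2" "hd L = bb i" "last L = bb j"
      "set (butlast (tl L)) \<inter> bb ` {..<4} = {}" using c2 ij(1,2) unfolding L_def by auto
  have cL: "consec L a b" using ij(3) L_def by simp
  have LX: "set L \<subseteq> X" using pin ij L_def by simp
  have abL: "a \<in> set L" "b \<in> set L" using consec_in[OF cL] by auto
  have PL: "set P \<inter> set L = {a,b}"
  proof
    show "set P \<inter> set L \<subseteq> {a,b}" using PW LX XW by blast
    show "{a,b} \<subseteq> set P \<inter> set L" using abL abW by simp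
  qed
  from splice[OF L(1) cL dP Pne hP lP PL nab] obtain L' where L'0: "distinct L' \<and> hd L' = hd L \<and> last L' = last L \<and> set L' = set L \<union> set P
     \<and> length L' \<ge> length L
     \<and> (\<forall>u v. consec L' u v \<longleftrightarrow> (consec L u v \<and> {u,v} \<noteq> {a,b}) \<or> consec P u v)" ..
  have L': "distinct L'" "hd L' = hd L" "last L' = last L" "set L' = set L \<union> set P"
     "length L' \<ge> length L"
     "\<And>u v. consec L' u v \<longleftrightarrow> (consec L u v \<and> {u,v} \<noteq> {a,b}) \<or> consec P u v"
    using L'0 by blast+
  define pp' where "pp' k l = (if k = i \<and> l = j then L' else pp k l)" for k l
  have pp'ij: "pp' i j = L'" unfolding pp'_def by simp
  have pp'o: "pp' k l = pp k l" if "(k,l) \<noteq> (i,j)" for k l using that unfolding pp'_def by auto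
  have uniq: "\<not> consec (pp k l) a b" if "k < l" "l < 4" "(k,l) \<noteq> (i,j)" for k l
  proof
    assume ck: "consec (pp k l) a b"
    have abk: "a \<in> set (pp k l)" "b \<in> set (pp k l)" using consec_in[OF ck] by auto
    have "(i,j) \<noteq> (k,l)" using that(3) by auto
    then have "set L \<inter> set (pp k l) \<subseteq> bb ` {..<4}" using c3[rule_format, of i j k l] ij that unfolding L_def by blast
    then have abB: "a \<in> bb ` {..<4}" "b \<in> bb ` {..<4}" using abk abL by auto
    have e1: "a = bb i \<or> a = bb j" "b = bb i \<or> b = bb j"
      using endp[OF ij(1,2)] abL abB unfolding L_def by auto
    have e2: "a = bb k \<or> a = bb l" "b = bb k \<or> b = bb l"
      using endp[OF that(1,2)] abk abB by auto
    have lt: "i < 4" "j < 4" "k < 4" "l < 4" using ij that by auto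
    have idx: "m = i \<or> m = j" if "m < 4" "bb m = a \<or> bb m = b" for m
      using that e1 injD[of m i] injD[of m j] lt by auto
    have "bb k = a \<or> bb k = b" "bb l = a \<or> bb l = b" using e2 ab by auto
    then have "k = i \<or> k = j" "l = i \<or> l = j" using idx lt by auto
    then show False using ij(1) that(1,3) by auto
  qed
  have C2: "\<forall>k l. k < l \<and> l < 4 \<longrightarrow>
        distinct (pp' k l) \<and> length (pp' k l) \<ge> 2 \<and> hd (pp' k l) = bb k \<and> last (pp' k l) = bb l \<and>
        set (butlast (tl (pp' k l))) \<inter> bb ` {..<4} = {}"
  proof (intro allI impI)
    fix k l :: nat assume kl: "k < l \<and> l < 4"
    show "distinct (pp' k l) \<and> length (pp' k l) \<ge> 2 \<and> hd (pp' k l) = bb k \<and> last (pp' k l) = bb l \<and>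
        set (butlast (tl (pp' k l))) \<inter> bb ` {..<4} = {}"
    proof (cases "(k,l) = (i,j)")
      case False
      then show ?thesis using c2 kl pp'o by simp
    next
      case True
      then have kl': "k = i" "l = j" by auto
      have len: "length L' \<ge> 2" using L'(5) L(2) by simp
      have inn: "set (butlast (tl L')) \<inter> bb ` {..<4} = {}"
      proof -
        have innL: "set L - {bb i, bb j} = set (butlast (tl L))" using inner_set[OF L(1,2)] L(3,4) by simp
        have "set (butlast (tl L')) = (set L \<union> set P) - {bb i, bb j}"
          using inner_set[OF L'(1) len] L'(2,3,4) L(3,4) by simp
        moreover have "z \<notin> bb ` {..<4}" if "z \<in> (set L \<union> set P) - {bb i, bb j}" for z
        proof
          assume zB: "z \<in> bb ` {..<4}"
          have "z \<in> set L"
          proof (cases "z \<in> set P")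
            case True
            then have "z \<in> set P \<inter> W" using zB BX XW by auto
            then show ?thesis using PW abL by auto
          next
            case False
            then show ?thesis using that by auto
          qed
          then have "z \<in> set (butlast (tl L))" using innL that by auto
          then show False using L(5) zB by auto
        qed
        ultimately show ?thesis by auto
      qed
      show ?thesis unfolding kl' pp'ij using L'(1,2,3) L(3,4) len inn by simp
    qed
  qed
  have C3: "\<forall>i' j' k l. i' < j' \<and> j' < 4 \<and> k < l \<and> l < 4 \<and> (i', j') \<noteq> (k, l) \<longrightarrow>
        set (pp' i' j') \<inter> set (pp' k l) \<subseteq> bb ` {..<4}"
  proof (intro allI impI)
    fix i' j' k l :: nat assume hh: "i' < j' \<and> j' < 4 \<and> k < l \<and> l < 4 \<and> (i', j') \<noteq> (k, l)"
    have one: "set L' \<inter> set (pp k l) \<subseteq> bb ` {..<4}" if "k < l" "l < 4" "(k,l) \<noteq> (i,j)" for k l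
    proof
      fix z assume z: "z \<in> set L' \<inter> set (pp k l)"
      have zL: "z \<in> set L"
      proof (cases "z \<in> set P")
        case True
        then have "z \<in> set P \<inter> W" using z pin[OF that(1,2)] XW by auto
        then show ?thesis using PW abL by auto
      next
        case False
        then show ?thesis using z L'(4) by auto
      qed
      have "(i,j) \<noteq> (k,l)" using that(3) by auto
    then have "set L \<inter> set (pp k l) \<subseteq> bb ` {..<4}" using c3[rule_format, of i j k l] ij that unfolding L_def by blast
      then show "z \<in> bb ` {..<4}" using zL z by auto
    qed
    show "set (pp' i' j') \<inter> set (pp' k l) \<subseteq> bb ` {..<4}"
    proof (cases "(i',j') = (i,j)")
      case True
      then have "(k,l) \<noteq> (i,j)" using hh by auto
      then show ?thesis using one[of k l] hh True pp'ij pp'o by auto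
    next
      case F1: False
      show ?thesis
      proof (cases "(k,l) = (i,j)")
        case True
        then show ?thesis using one[of i' j'] hh F1 pp'ij pp'o by auto
      next
        case False
        then have "pp' i' j' = pp i' j'" "pp' k l = pp k l" using F1 pp'o by auto
        then show ?thesis using c3[rule_format, of i' j' k l] hh by simp
      qed
    qed
  qed
  have C4: "X \<union> set P = (\<Union>k<4. \<Union>l\<in>{k<..<4}. set (pp' k l))"
  proof (rule set_eqI)
    fix z
    show "z \<in> X \<union> set P \<longleftrightarrow> z \<in> (\<Union>k<4. \<Union>l\<in>{k<..<4}. set (pp' k l))"
      unfolding mem_U4
    proof
      assume "z \<in> X \<union> set P"
      then show "\<exists>k l. k < l \<and> l < 4 \<and> z \<in> set (pp' k l)"
      proof
        assume "z \<in> X"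
        then obtain k l where kl: "k < l" "l < 4" "z \<in> set (pp k l)" unfolding c4 mem_U4 by blast
        show ?thesis
        proof (cases "(k,l) = (i,j)")
          case True
          then have "z \<in> set (pp' i j)" using kl L'(4) pp'ij L_def by auto
          then show ?thesis using ij by blast
        next
          case False
          then show ?thesis using kl pp'o by metis
        qed
      next
        assume "z \<in> set P"
        then have "z \<in> set (pp' i j)" using L'(4) pp'ij by auto
        then show ?thesis using ij by blast
      qed
    next
      assume "\<exists>k l. k < l \<and> l < 4 \<and> z \<in> set (pp' k l)"
      then obtain k l where kl: "k < l" "l < 4" "z \<in> set (pp' k l)" by blast
      show "z \<in> X \<union> set P"
      proof (cases "(k,l) = (i,j)")
        case True
        then show ?thesis using kl L'(4) pp'ij LX by auto
      next
        case False
        then have "z \<in> set (pp k l)" using kl pp'o by metis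
        then show ?thesis using pin[OF kl(1,2)] by auto
      qed
    qed
  qed
  have C5: "\<forall>u\<in>X \<union> set P. \<forall>v\<in>X \<union> set P. u \<noteq> v \<longrightarrow>
        (E' u v \<longleftrightarrow> (\<exists>k l. k < l \<and> l < 4 \<and> consec (pp' k l) u v))"
  proof (intro ballI impI)
    fix u v assume u: "u \<in> X \<union> set P" and v: "v \<in> X \<union> set P" and uv: "u \<noteq> v"
    let ?Old = "\<lambda>u v. \<exists>k l. k < l \<and> l < 4 \<and> consec (pp k l) u v"
    let ?New = "\<lambda>u v. \<exists>k l. k < l \<and> l < 4 \<and> consec (pp' k l) u v"
    have old: "E u v = ?Old u v" if "u \<in> X" "v \<in> X" "u \<noteq> v" for u v using c5 that by simp
    have oldin: "u \<in> X \<and> v \<in> X" if "?Old u v" for u v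
    proof -
      from that obtain k l where kl: "k < l" "l < 4" "consec (pp k l) u v" by blast
      from kl(3) have "u \<in> set (pp k l) \<and> v \<in> set (pp k l)" by (rule consec_in)
      then show ?thesis using pin[OF kl(1,2)] by blast
    qed
    have new: "?New u v = ((?Old u v \<and> {u,v} \<noteq> {a,b}) \<or> consec P u v)" for u v
    proof -
      let ?others = "\<exists>k l. k < l \<and> l < 4 \<and> (k,l) \<noteq> (i,j) \<and> consec (pp k l) u v"
      have e1: "?New u v = (consec L' u v \<or> ?others)"
      proof -
        have o: "(k < l \<and> l < 4 \<and> (k,l) \<noteq> (i,j) \<and> consec (pp' k l) u v) =
           (k < l \<and> l < 4 \<and> (k,l) \<noteq> (i,j) \<and> consec (pp k l) u v)" for k l
          using pp'o[of k l] by auto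
        show ?thesis unfolding ex_split_pair[OF ij(1,2), of "\<lambda>k l. consec (pp' k l) u v"] pp'ij o ..
      qed
      have e2: "?Old u v = (consec L u v \<or> ?others)"
        unfolding ex_split_pair[OF ij(1,2), of "\<lambda>k l. consec (pp k l) u v"] L_def by simp
      have e3: "{u,v} = {a,b} \<Longrightarrow> \<not> ?others"
      proof
        assume uvab: "{u,v} = {a,b}" and "?others"
        then obtain k l where kl: "k < l" "l < 4" "(k,l) \<noteq> (i,j)" "consec (pp k l) u v" by blast
        have "(u = a \<and> v = b) \<or> (u = b \<and> v = a)" using uvab by (simp add: doubleton_eq_iff)
        then have "consec (pp k l) a b" using kl(4) consec_sym by metis
        then show False using uniq kl by blast
      qed
      show ?thesis unfolding e1 e2 L'(6) using e3 by (rule prop3)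
    qed
    show "E' u v \<longleftrightarrow> ?New u v"
      by (rule edge_char[OF XW aX bX old new oldin u v uv])
  qed
  have "isk4_in E' (X \<union> set P)" unfolding isk4_in_def
    by (rule exI[of _ bb], rule exI[of _ pp']) (intro conjI c1 C2 C3 C4 C5)
  then show ?thesis by blast
qed

end

context subdiv
begin

lemma wheel_sub:
  assumes XW: "X \<subseteq> W" and h: "wheel_in E X"
  shows "\<exists>Y \<subseteq> X \<union> set P. isk4_in E' Y \<or> wheel_in E' Y"
proof (cases "a \<in> X \<and> b \<in> X")
  case False
  then have "wheel_in E' X" using wheel_agree[OF agreeX[OF XW False] h] by simp
  then show ?thesis by blast
next
  case True
  then have aX: "a \<in> X" and bX: "b \<in> X" by auto
  from h obtain H c where w: "X = insert c H" "c \<notin> H" "hole E H" "card {v \<in> H. E c v} \<ge> 3"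
    unfolding wheel_in_def by blast
  from w(3) obtain cs where h0: "distinct cs \<and> length cs \<ge> 4 \<and> set cs = H \<and>
     (\<forall>u\<in>H. \<forall>v\<in>H. u \<noteq> v \<longrightarrow> (E u v \<longleftrightarrow> consec_cyc cs u v))"
    unfolding hole_def by (elim exE) (rule that)
  from h0 have dcs: "distinct cs" and lcs: "length cs \<ge> 4" and scs: "set cs = H" by auto
  from h0 have hc: "\<forall>u\<in>H. \<forall>v\<in>H. u \<noteq> v \<longrightarrow> (E u v \<longleftrightarrow> consec_cyc cs u v)" by (elim conjE)
  have finH: "finite H" using scs by auto
  have HW: "H \<subseteq> W" "c \<in> W" using XW w(1) by auto
  show ?thesis
  proof (cases "card {v \<in> H. E c v} = 3")
    case True
    have "isk4_in E X" using w3[OF w(3) w(2) True symE] w(1) by simp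
    then obtain Y where "Y \<subseteq> X \<union> set P" "isk4_in E' Y" using isk4_sub[OF XW] by blast
    then show ?thesis by blast
  next
    case False
    then have c4: "card {v \<in> H. E c v} \<ge> 4" using w(4) by simp
    show ?thesis
    proof (cases "c \<in> {a,b}")
      case True
      obtain d where cd: "{c,d} = {a,b}" "c \<noteq> d" using True ab by auto
      have dH: "d \<in> H" using cd aX bX w(1) by (auto simp: doubleton_eq_iff)
      have nE'cd: "\<not> E' c d" using cd nE'ab symE' by (metis doubleton_eq_iff)
      have agH: "\<forall>u\<in>H. \<forall>v\<in>H. E u v = E' u v"
      proof (intro ballI)
        fix u v assume uv: "u \<in> H" "v \<in> H"
        have "{u,v} \<noteq> {a,b}"
        proof
          assume "{u,v} = {a,b}"
          then have "c \<in> {u,v}" using cd by auto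
          then show False using uv w(2) by auto
        qed
        then show "E u v = E' u v" using agree uv HW by auto
      qed
      have hole': "hole E' H" by (rule hole_agree[OF agH w(3)])
      have sp: "{v \<in> H. E' c v} = {v \<in> H. E c v} - {d}"
      proof (rule set_eqI)
        fix v
        show "v \<in> {v \<in> H. E' c v} \<longleftrightarrow> v \<in> {v \<in> H. E c v} - {d}"
        proof (cases "v = d")
          case True
          then show ?thesis using nE'cd by simp
        next
          case False
          then have "{c,v} \<noteq> {a,b}" using cd dbl_same[OF cd(2), of v] by simp
          then have "v \<in> H \<Longrightarrow> E' c v = E c v" using agree HW by auto
          then show ?thesis using False by auto
        qed
      qed
      have "card ({v \<in> H. E c v} - {d}) \<ge> 3"
        using c4 card_Diff_singleton_if[of "{v \<in> H. E c v}" d] finH by auto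
      then have "wheel_in E' X" unfolding wheel_in_def using w(1,2) hole' sp
        by (intro exI[of _ H] exI[of _ c]) simp
      then show ?thesis by blast
    next
      case False
      then have cab: "c \<noteq> a" "c \<noteq> b" by auto
      have aH: "a \<in> H" "b \<in> H" using aX bX w(1) cab by auto
      have ccab: "consec_cyc cs a b" using hc aH ab Eab by blast
      have PL: "set P \<inter> set cs = {a,b}"
      proof
        show "set P \<inter> set cs \<subseteq> {a,b}" using PW scs HW by blast
        show "{a,b} \<subseteq> set P \<inter> set cs" using aH abW scs by simp
      qed
      have l3: "length cs \<ge> 3" using lcs by simp
      from cyc_splice[OF dcs l3 ccab ab dP Pne hP lP PL nab] obtain cs' where cs'0:
        "distinct cs' \<and> set cs' = set cs \<union> set P \<and> length cs' \<ge> length cs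
         \<and> (\<forall>u v. consec_cyc cs' u v \<longleftrightarrow> (consec_cyc cs u v \<and> {u,v} \<noteq> {a,b}) \<or> consec P u v)" ..
      have cs': "distinct cs'" "set cs' = H \<union> set P" "length cs' \<ge> 4"
        "\<And>u v. consec_cyc cs' u v \<longleftrightarrow> (consec_cyc cs u v \<and> {u,v} \<noteq> {a,b}) \<or> consec P u v"
        using cs'0 scs lcs by auto
      have char': "\<forall>u\<in>set cs'. \<forall>v\<in>set cs'. u \<noteq> v \<longrightarrow> (E' u v \<longleftrightarrow> consec_cyc cs' u v)"
      proof (intro ballI impI)
        fix u v assume u: "u \<in> set cs'" and v: "v \<in> set cs'" and uv: "u \<noteq> v"
        have old: "E u v = consec_cyc cs u v" if "u \<in> H" "v \<in> H" "u \<noteq> v" for u v using hc that by simp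
        have oldin: "u \<in> H \<and> v \<in> H" if "consec_cyc cs u v" for u v using consec_cyc_in[OF that] scs by simp
        show "E' u v \<longleftrightarrow> consec_cyc cs' u v"
          by (rule edge_char[OF HW(1) aH old cs'(4) oldin]) (use u v uv cs'(2) in auto)
      qed
      have hole': "hole E' (set cs')" unfolding hole_def using cs'(1,3) char' by blast
      have cP: "c \<notin> set P" using PW HW cab by auto
      have cn: "c \<notin> set cs'" using cs'(2) w(2) cP by auto
      have sp: "{v \<in> set cs'. E' c v} = {v \<in> H. E c v}"
      proof (rule set_eqI)
        fix v
        show "v \<in> {v \<in> set cs'. E' c v} \<longleftrightarrow> v \<in> {v \<in> H. E c v}"
        proof (cases "v \<in> H")
          case True
          have "{c,v} \<noteq> {a,b}" using cab by (auto simp: doubleton_eq_iff)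
          then have "E' c v = E c v" using agree HW True by auto
          then show ?thesis using True cs'(2) by auto
        next
          case False
          have "\<not> E' c v" if vP: "v \<in> set P"
          proof
            assume "E' c v"
            have vW: "v \<notin> W" using vP False PW aH by auto
            have "E' v c = consec P v c" using newP[OF vP vW] HW by auto
            then have "consec P v c" using \<open>E' c v\<close> symE' by simp
            then show False using consec_in cP by fastforce
          qed
          then show ?thesis using False cs'(2) by auto
        qed
      qed
      have "wheel_in E' (insert c (set cs'))" unfolding wheel_in_def using cn hole' sp c4
        by (intro exI[of _ "set cs'"] exI[of _ c]) simp
      moreover have "insert c (set cs') \<subseteq> X \<union> set P" using cs'(2) w(1) by auto
      ultimately show ?thesis by blast
    qed
  qed
qed

end

lemma bt_clique:
  assumes "strong_clique V th C"
  shows "block_theta th C = th"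
proof -
  have nc: "\<not> (\<exists>a b. a \<noteq> b \<and> C = {a, b} \<and> th a b \<le> 0)"
    using assms unfolding strong_clique_def by fastforce
  show ?thesis unfolding block_theta_def by (rule if_not_P[OF nc])
qed

lemma bt_stable:
  assumes "a \<noteq> b" "C = {a,b}" "th a b \<le> 0"
  shows "block_theta th C = (\<lambda>u v. if u \<noteq> v \<and> {u, v} = C then 0 else th u v)"
  using assms unfolding block_theta_def by auto

lemma realI:
  assumes "\<And>u v. E u v \<Longrightarrow> u \<in> V \<and> v \<in> V \<and> u \<noteq> v \<and> E v u"
    and "\<And>u v. u \<in> V \<Longrightarrow> v \<in> V \<Longrightarrow> u \<noteq> v \<Longrightarrow> th u v = 1 \<Longrightarrow> E u v"
    and "\<And>u v. u \<in> V \<Longrightarrow> v \<in> V \<Longrightarrow> u \<noteq> v \<Longrightarrow> th u v = -1 \<Longrightarrow> \<not> E u v"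
  shows "realization V th E"
  unfolding realization_def using assms by blast

lemma main_A:
  assumes tri: "trigraph V th" and fr: "isk4_wheel_free V th" and cp: "cut_partition V th A B C"
    and ty: "strong_clique V th C \<or> (\<exists>a b. a \<noteq> b \<and> C = {a,b} \<and> th a b \<le> 0 \<and> narrow_path (B \<union> C) th a b)"
  shows "isk4_wheel_free (A \<union> C) (block_theta th C)"
  unfolding isk4_wheel_free_def
proof (intro allI impI notI)
  fix E assume rE: "realization (A \<union> C) (block_theta th C) E"
  assume "\<exists>X\<subseteq>A \<union> C. isk4_in E X \<or> wheel_in E X"
  then obtain X where XW: "X \<subseteq> A \<union> C" and hX: "isk4_in E X \<or> wheel_in E X" by blast
  define W where "W = A \<union> C"
  have WV: "W \<subseteq> V" using cp unfolding cut_partition_def W_def by auto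
  have thsym: "th u v = th v u" if "u \<in> V" "v \<in> V" "u \<noteq> v" for u v
    using tri that unfolding trigraph_def by auto
  have thval: "th u v \<in> {-1,0,1}" if "u \<in> V" "v \<in> V" "u \<noteq> v" for u v
    using tri that unfolding trigraph_def by auto
  have Esupp: "u \<in> W \<and> v \<in> W \<and> u \<noteq> v \<and> E v u" if "E u v" for u v
    using rE that unfolding realization_def W_def by blast
  have symE: "E u v = E v u" for u v using Esupp by blast
  have Ereal: "(block_theta th C u v = 1 \<longrightarrow> E u v) \<and> (block_theta th C u v = -1 \<longrightarrow> \<not> E u v)"
    if "u \<in> W" "v \<in> W" "u \<noteq> v" for u v
    using rE that unfolding realization_def W_def by blast
  have free': False if "realization V th E'" "X' \<subseteq> V" "isk4_in E' X' \<or> wheel_in E' X'" for E' X'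
    using fr that unfolding isk4_wheel_free_def by blast
  have XV: "X \<subseteq> W" using XW W_def by simp
  show False
  proof (cases "strong_clique V th C \<or> (\<exists>a b. a \<noteq> b \<and> C = {a,b} \<and> th a b \<le> 0 \<and> (\<not> E a b \<or> th a b = 0))")
    case True
    note gc = True
    define E' where "E' u v = (if u \<in> W \<and> v \<in> W then E u v else u \<in> V \<and> v \<in> V \<and> u \<noteq> v \<and> th u v = 1)" for u v
    have btW: "(th u v = 1 \<longrightarrow> E u v) \<and> (th u v = -1 \<longrightarrow> \<not> E u v)" if "u \<in> W" "v \<in> W" "u \<noteq> v" for u v
    proof (cases "strong_clique V th C")
      case True
      then show ?thesis using Ereal[OF that] bt_clique by metis
    next
      case False
      then obtain a b where st: "a \<noteq> b" "C = {a,b}" "th a b \<le> 0" "\<not> E a b \<or> th a b = 0"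
        using gc by blast
      have bt: "block_theta th C = (\<lambda>u v. if u \<noteq> v \<and> {u, v} = C then 0 else th u v)"
        by (rule bt_stable[of a b C th, OF st(1-3)])
      show ?thesis
      proof (cases "{u,v} = C")
        case True
        then have uvab: "(u = a \<and> v = b) \<or> (u = b \<and> v = a)" using st(2) by (simp add: doubleton_eq_iff)
        have abV: "a \<in> V" "b \<in> V" using st(2) WV W_def by auto
        have "th u v = th a b" using uvab thsym[OF abV st(1)] by auto
        moreover have "E u v = E a b" using uvab symE by auto
        ultimately show ?thesis using st(3,4) by auto
      next
        case False
        then have "block_theta th C u v = th u v" using bt that(3) by simp
        then show ?thesis using Ereal[OF that] by simp
      qed
    qed
    have real': "realization V th E'"
    proof (rule realI)
      fix u v assume "E' u v"
      then show "u \<in> V \<and> v \<in> V \<and> u \<noteq> v \<and> E' v u"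
        unfolding E'_def using Esupp WV thsym by (auto split: if_splits)
    next
      fix u v assume "u \<in> V" "v \<in> V" "u \<noteq> v" "th u v = 1"
      then show "E' u v" unfolding E'_def using btW by auto
    next
      fix u v assume "u \<in> V" "v \<in> V" "u \<noteq> v" "th u v = -1"
      then show "\<not> E' u v" unfolding E'_def using btW by auto
    qed
    have ag: "\<forall>u\<in>X. \<forall>v\<in>X. E u v = E' u v" using XV unfolding E'_def by auto
    have "isk4_in E' X \<or> wheel_in E' X" using hX isk4_agree[OF ag] wheel_agree[OF ag] by blast
    then show False using free'[OF real'] XV WV by blast
  next
    case False
    then obtain a b where st: "a \<noteq> b" "C = {a,b}" "th a b \<le> 0" "narrow_path (B \<union> C) th a b"
      using ty by blast
    have Eab: "E a b" "th a b \<noteq> 0" using False st by blast+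
    have abV: "a \<in> V" "b \<in> V" using st(2) WV W_def by auto
    have thab: "th a b = -1" using thval[OF abV st(1)] st(3) Eab(2) by auto
    have bt: "block_theta th C = (\<lambda>u v. if u \<noteq> v \<and> {u, v} = C then 0 else th u v)"
      by (rule bt_stable[of a b C th, OF st(1-3)])
    from st(4) obtain p where p0: "p \<noteq> [] \<and> distinct p \<and> hd p = a \<and> last p = b \<and> set p \<subseteq> B \<union> C \<and>
     (\<forall>u\<in>set p. \<forall>v\<in>set p. u \<noteq> v \<longrightarrow> (th u v \<ge> 0 \<longleftrightarrow> consec p u v))"
      unfolding narrow_path_def by (elim exE) (rule that)
    have p: "p \<noteq> []" "distinct p" "hd p = a" "last p = b" "set p \<subseteq> B \<union> C" using p0 by auto
    have pc: "\<forall>u\<in>set p. \<forall>v\<in>set p. u \<noteq> v \<longrightarrow> (th u v \<ge> 0 \<longleftrightarrow> consec p u v)" using p0 by (elim conjE)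
    have pV: "set p \<subseteq> V" using p(5) cp unfolding cut_partition_def by auto
    have abp: "a \<in> set p" "b \<in> set p" using p by auto
    have cpAB: "th u v = -1" if "u \<in> A" "v \<in> B" for u v using cp that unfolding cut_partition_def by auto
    have disj: "A \<inter> B = {}" "A \<inter> C = {}" "B \<inter> C = {}" using cp unfolding cut_partition_def by auto
    define E' where "E' u v = (u \<in> V \<and> v \<in> V \<and> u \<noteq> v \<and> (if u \<in> W \<and> v \<in> W then E u v \<and> {u,v} \<noteq> {a,b}
        else if u \<in> set p \<and> v \<in> set p then consec p u v else th u v = 1))" for u v
    have E'sym: "E' u v = E' v u" for u v
    proof (cases "u \<in> V \<and> v \<in> V \<and> u \<noteq> v")
      case True
      then have t: "th u v = th v u" using thsym by blast
      have d: "{v,u} = {u,v}" by auto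
      have c: "(u \<in> W \<and> v \<in> W) = (v \<in> W \<and> u \<in> W)" "(u \<in> set p \<and> v \<in> set p) = (v \<in> set p \<and> u \<in> set p)" by auto
      show ?thesis unfolding E'_def c d t using symE[of u v] consec_sym[of p u v] by auto
    next
      case False
      then show ?thesis unfolding E'_def by auto
    qed
    have real': "realization V th E'"
    proof (rule realI)
      fix u v assume "E' u v"
      then show "u \<in> V \<and> v \<in> V \<and> u \<noteq> v \<and> E' v u"
        using E'sym[of u v] unfolding E'_def by auto
    next
      fix u v assume uv: "u \<in> V" "v \<in> V" "u \<noteq> v" "th u v = 1"
      show "E' u v"
      proof (cases "u \<in> W \<and> v \<in> W")
        case True
        have "{u,v} \<noteq> {a,b}"
        proof
          assume "{u,v} = {a,b}"
          then have "(u = a \<and> v = b) \<or> (u = b \<and> v = a)" by (simp add: doubleton_eq_iff)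
          then show False using thab uv(4) thsym[OF abV st(1)] by auto
        qed
        then have "block_theta th C u v = 1" using bt uv st(2) by simp
        then show ?thesis unfolding E'_def using Ereal True uv \<open>{u,v} \<noteq> {a,b}\<close> by auto
      next
        case False
        then show ?thesis unfolding E'_def using pc[rule_format, of u v] uv by auto
      qed
    next
      fix u v assume uv: "u \<in> V" "v \<in> V" "u \<noteq> v" "th u v = -1"
      show "\<not> E' u v"
      proof (cases "u \<in> W \<and> v \<in> W")
        case True
        show ?thesis
        proof (cases "{u,v} = {a,b}")
          case True
          then show ?thesis unfolding E'_def using \<open>u \<in> W \<and> v \<in> W\<close> by auto
        next
          case False
          then have "block_theta th C u v = -1" using bt uv st(2) by simp
          then show ?thesis unfolding E'_def using Ereal \<open>u \<in> W \<and> v \<in> W\<close> uv by auto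
        qed
      next
        case False
        then show ?thesis unfolding E'_def using pc[rule_format, of u v] uv by auto
      qed
    qed
    have PW: "set p \<inter> W = {a,b}"
    proof
      show "set p \<inter> W \<subseteq> {a,b}" using p(5) disj st(2) unfolding W_def by auto
      show "{a,b} \<subseteq> set p \<inter> W" using abp st(2) unfolding W_def by auto
    qed
    have nab: "\<not> consec p a b" using pc[rule_format, of a b] abp st(1) thab by auto
    have sd: "subdiv E E' W a b p"
    proof (unfold_locales)
      show "a \<noteq> b" by (rule st(1))
      show "E a b" by (rule Eab(1))
      show "distinct p" "p \<noteq> []" "hd p = a" "last p = b" using p by auto
      show "set p \<inter> W = {a,b}" by (rule PW)
      show "\<not> consec p a b" by (rule nab)
      show "E' u v = E u v" if "u \<in> W" "v \<in> W" "{u,v} \<noteq> {a,b}" for u v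
        unfolding E'_def using that WV Esupp by auto
      have abW': "a \<in> W" "b \<in> W" using st(2) unfolding W_def by auto
      then show "\<not> E' a b" unfolding E'_def by auto
      show "E' u v = consec p u v" if "u \<in> set p" "u \<notin> W" "v \<in> W \<union> set p" for u v
      proof (cases "v \<in> set p")
        case True
        have "\<not> consec p u u" using p(2) by (rule consec_distinct_same)
        then show ?thesis unfolding E'_def using that True pV by auto
      next
        case False
        then have vA: "v \<in> A" using that(3) st(2) abp unfolding W_def by auto
        have uB: "u \<in> B" using that(1,2) p(5) unfolding W_def by auto
        have uv: "u \<noteq> v" using vA uB disj by auto
        have vV: "v \<in> V" using vA cp unfolding cut_partition_def by auto
        have uV: "u \<in> V" using that(1) pV by auto
        have "th u v = -1" using cpAB[OF vA uB] thsym[OF uV vV uv] by simp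
        moreover have "\<not> consec p u v" using False consec_in by fastforce
        ultimately show ?thesis unfolding E'_def using that(2) False by auto
      qed
      show "E u v = E v u" for u v by (rule symE)
      show "E' u v = E' v u" for u v by (rule E'sym)
    qed
    have pV': "X \<union> set p \<subseteq> V" using XV WV pV by auto
    from hX show False
    proof
      assume "isk4_in E X"
      then obtain Y where "Y \<subseteq> X \<union> set p" "isk4_in E' Y" using subdiv.isk4_sub[OF sd XV] by blast
      then show False using free'[OF real'] pV' by blast
    next
      assume "wheel_in E X"
      then obtain Y where "Y \<subseteq> X \<union> set p" "isk4_in E' Y \<or> wheel_in E' Y" using subdiv.wheel_sub[OF sd XV] by blast
      then show False using free'[OF real'] pV' by blast
    qed
  qed
qed

theorem proposition4p4:
  fixes V :: "'a set" and th :: "'a \<Rightarrow> 'a \<Rightarrow> int" and A B C :: "'a set"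
  assumes "trigraph V th"
    and "isk4_wheel_free V th"
    and "good_cut_partition V th A B C"
  shows "isk4_wheel_free (A \<union> C) (block_theta th C) \<and> isk4_wheel_free (B \<union> C) (block_theta th C)"
proof -
  have cp: "cut_partition V th A B C" using assms(3) unfolding good_cut_partition_def by blast
  have thsym: "th u v = th v u" if "u \<in> V" "v \<in> V" "u \<noteq> v" for u v
    using assms(1) that unfolding trigraph_def by auto
  have cp': "cut_partition V th B A C"
    using cp thsym unfolding cut_partition_def by (metis Int_commute UnCI disjoint_iff sup_commute)
  have ty: "strong_clique V th C \<or> (\<exists>a b. a \<noteq> b \<and> C = {a,b} \<and> th a b \<le> 0 \<and> narrow_path (B \<union> C) th a b \<and> narrow_path (A \<union> C) th a b)"
  proof -
    from assms(3) have "(clique_cutset V th C \<and> card C \<le> 3) \<or>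
      (stable_2cutset V th C \<and>
        (\<exists>a b. a \<noteq> b \<and> C = {a, b} \<and> narrow_path (A \<union> C) th a b \<and> narrow_path (B \<union> C) th a b))"
      unfolding good_cut_partition_def by blast
    then show ?thesis
    proof
      assume "clique_cutset V th C \<and> card C \<le> 3"
      then show ?thesis unfolding clique_cutset_def by blast
    next
      assume h: "stable_2cutset V th C \<and>
        (\<exists>a b. a \<noteq> b \<and> C = {a, b} \<and> narrow_path (A \<union> C) th a b \<and> narrow_path (B \<union> C) th a b)"
      then obtain a b where ab: "a \<noteq> b" "C = {a, b}" "narrow_path (A \<union> C) th a b" "narrow_path (B \<union> C) th a b"
        by blast
      have "stable_set V th C" using h unfolding stable_2cutset_def by blast
      then have "th a b \<le> 0" using ab unfolding stable_set_def by auto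
      then show ?thesis using ab by blast
    qed
  qed
  have A: "isk4_wheel_free (A \<union> C) (block_theta th C)"
    by (rule main_A[OF assms(1,2) cp]) (use ty in blast)
  have B: "isk4_wheel_free (B \<union> C) (block_theta th C)"
    by (rule main_A[OF assms(1,2) cp']) (use ty in blast)
  show ?thesis using A B by blast
qed

end
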